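(* Let $G$ be a connected graph with minimum degree at least three. Suppose $G$ contains two distinct vertices $v,v'$ joined by exactly two parallel edges $a,b$, such that each of $v,v'$ has degree exactly $3$, its third edge going to a vertex outside $\{v,v'\}$. (Such $v$ is called a $\beta$-vertex.) If $G-v$ is connected, then $\gamma_M(G-v)=\gamma_M(G)-1$; that is, $v$ is a 1-critical-vertex of $G$.
   Context: Graphs may have multiple edges. $\gamma_M(H)$ is the maximum genus of a connected graph $H$ (largest $k$ such that $H$ embeds cellularly in the orientable surface of genus $k$). A vertex $v$ of $G$ is a 1-critical-vertex if $G-v$ is connected and $\gamma_M(G-v)=\gamma_M(G)-1$. *)

theory Defs
  imports Main
begin

text \<open>A finite multigraph (loops and parallel edges allowed): vertex set V, edge set E,
  and an endpoint map ends; edge e joins fst (ends e) and snd (ends e).\<close>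

definition multigraph :: "'v set \<Rightarrow> 'e set \<Rightarrow> ('e \<Rightarrow> 'v \<times> 'v) \<Rightarrow> bool" where
  "multigraph V E ends \<longleftrightarrow> finite V \<and> finite E \<and>
     (\<forall>e\<in>E. fst (ends e) \<in> V \<and> snd (ends e) \<in> V)"

definition incident :: "('e \<Rightarrow> 'v \<times> 'v) \<Rightarrow> 'e \<Rightarrow> 'v \<Rightarrow> bool" where
  "incident ends e v \<longleftrightarrow> fst (ends e) = v \<or> snd (ends e) = v"

text \<open>Degree: a loop counts twice.\<close>
definition degree :: "'e set \<Rightarrow> ('e \<Rightarrow> 'v \<times> 'v) \<Rightarrow> 'v \<Rightarrow> nat" where
  "degree E ends v = card {e\<in>E. fst (ends e) = v} + card {e\<in>E. snd (ends e) = v}"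

definition adjacent :: "'e set \<Rightarrow> ('e \<Rightarrow> 'v \<times> 'v) \<Rightarrow> 'v \<Rightarrow> 'v \<Rightarrow> bool" where
  "adjacent E ends x y \<longleftrightarrow> (\<exists>e\<in>E. ends e = (x, y) \<or> ends e = (y, x))"

definition connected_graph :: "'v set \<Rightarrow> 'e set \<Rightarrow> ('e \<Rightarrow> 'v \<times> 'v) \<Rightarrow> bool" where
  "connected_graph V E ends \<longleftrightarrow> V \<noteq> {} \<and>
     (\<forall>x\<in>V. \<forall>y\<in>V. (x, y) \<in> {(a, b). adjacent E ends a b}\<^sup>*)"

definition del_vertex_V :: "'v set \<Rightarrow> 'v \<Rightarrow> 'v set" where
  "del_vertex_V V v = V - {v}"

definition del_vertex_E :: "'e set \<Rightarrow> ('e \<Rightarrow> 'v \<times> 'v) \<Rightarrow> 'v \<Rightarrow> 'e set" where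
  "del_vertex_E E ends v = {e\<in>E. \<not> incident ends e v}"

text \<open>Combinatorial maps (Heffter--Edmonds).  Darts are pairs (e, b); the dart (e, True)
  starts at fst (ends e), the dart (e, False) at snd (ends e).\<close>

definition darts :: "'e set \<Rightarrow> ('e \<times> bool) set" where
  "darts E = E \<times> UNIV"

definition dart_tail :: "('e \<Rightarrow> 'v \<times> 'v) \<Rightarrow> 'e \<times> bool \<Rightarrow> 'v" where
  "dart_tail ends d = (if snd d then fst (ends (fst d)) else snd (ends (fst d)))"

definition dart_rev :: "'e \<times> bool \<Rightarrow> 'e \<times> bool" where
  "dart_rev d = (fst d, \<not> snd d)"

definition rotation_system ::
  "'v set \<Rightarrow> 'e set \<Rightarrow> ('e \<Rightarrow> 'v \<times> 'v) \<Rightarrow> ('e \<times> bool \<Rightarrow> 'e \<times> bool) \<Rightarrow> bool" where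
  "rotation_system V E ends \<sigma> \<longleftrightarrow>
     bij_betw \<sigma> (darts E) (darts E) \<and>
     (\<forall>d. d \<notin> darts E \<longrightarrow> \<sigma> d = d) \<and>
     (\<forall>d\<in>darts E. dart_tail ends (\<sigma> d) = dart_tail ends d) \<and>
     (\<forall>d\<in>darts E. \<forall>d'\<in>darts E. dart_tail ends d = dart_tail ends d' \<longrightarrow>
        (\<exists>n. (\<sigma> ^^ n) d = d'))"

definition orbit_of :: "('a \<Rightarrow> 'a) \<Rightarrow> 'a \<Rightarrow> 'a set" where
  "orbit_of f x = {(f ^^ n) x | n. True}"

text \<open>Number of faces of the embedding given by a rotation system: the orbits of
  the face-tracing permutation sigma o rev (a graph without edges has one face).\<close>
definition num_faces :: "'e set \<Rightarrow> ('e \<times> bool \<Rightarrow> 'e \<times> bool) \<Rightarrow> nat" where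
  "num_faces E \<sigma> = (if E = {} then 1
     else card (orbit_of (\<sigma> \<circ> dart_rev) ` darts E))"

text \<open>Genus of the orientable surface determined by the rotation system (Euler's formula
  V - E + F = 2 - 2g).\<close>
definition embedding_genus ::
  "'v set \<Rightarrow> 'e set \<Rightarrow> ('e \<times> bool \<Rightarrow> 'e \<times> bool) \<Rightarrow> int" where
  "embedding_genus V E \<sigma> =
     (2 - int (card V) + int (card E) - int (num_faces E \<sigma>)) div 2"

definition max_genus :: "'v set \<Rightarrow> 'e set \<Rightarrow> ('e \<Rightarrow> 'v \<times> 'v) \<Rightarrow> int" where
  "max_genus V E ends =
     Max {embedding_genus V E \<sigma> | \<sigma>. rotation_system V E ends \<sigma>}"

end

theory Submission
  imports Defs
begin


definition tsw :: "'a \<Rightarrow> 'a \<Rightarrow> 'a \<Rightarrow> 'a" where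
  "tsw x y z = (if z = x then y else if z = y then x else z)"

lemma orbit_iff: "y \<in> orbit_of f x \<longleftrightarrow> (\<exists>n. (f^^n) x = y)"
  unfolding orbit_of_def by auto

lemma orbit_self: "x \<in> orbit_of f x"
  unfolding orbit_iff by (rule exI[of _ 0]) simp

lemma orbit_step: "y \<in> orbit_of f x \<Longrightarrow> f y \<in> orbit_of f x"
  unfolding orbit_iff by (auto intro: exI[of _ "Suc _"])

lemma orbit_closed:
  assumes "x \<in> S" "\<And>y. y \<in> S \<Longrightarrow> f y \<in> S" shows "orbit_of f x \<subseteq> S"
proof
  fix y assume "y \<in> orbit_of f x"
  then obtain n where "y = (f^^n) x" by (auto simp: orbit_iff)
  moreover have "(f^^n) x \<in> S" for n by (induction n) (auto simp: assms)
  ultimately show "y \<in> S" by simp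
qed

lemma orbit_trans: "y \<in> orbit_of f x \<Longrightarrow> orbit_of f y \<subseteq> orbit_of f x"
  by (rule orbit_closed) (auto intro: orbit_step)

lemma orbit_agree:
  assumes "x \<in> S" "\<And>y. y \<in> S \<Longrightarrow> g y \<in> S" "\<And>y. y \<in> S \<Longrightarrow> f y = g y"
  shows "orbit_of f x = orbit_of g x"
proof -
  have "(f^^n) x = (g^^n) x \<and> (g^^n) x \<in> S" for n by (induction n) (auto simp: assms)
  hence eq: "(f^^n) x = (g^^n) x" for n by blast
  show ?thesis unfolding orbit_of_def by (simp add: eq)
qed

lemma orbit_sub: "x \<in> D \<Longrightarrow> f ` D \<subseteq> D \<Longrightarrow> orbit_of f x \<subseteq> D"
  by (rule orbit_closed) auto

lemma orbit_sym:
  assumes fin: "finite D" and bij: "bij_betw f D D" and x: "x \<in> D"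
    and y: "y \<in> orbit_of f x"
  shows "x \<in> orbit_of f y"
proof -
  have inj: "inj_on f D" and cl: "\<And>y. y \<in> D \<Longrightarrow> f y \<in> D"
    using bij by (auto simp: bij_betw_def)
  have inD: "(f^^n) x \<in> D" for n by (induction n) (auto simp: x cl)
  have "\<not> inj (\<lambda>n. (f^^n) x)"
  proof
    assume "inj (\<lambda>n. (f^^n) x)"
    moreover have "finite (range (\<lambda>n. (f^^n) x))"
      using inD by (auto intro: finite_subset[OF _ fin])
    ultimately have "finite (UNIV :: nat set)" using finite_imageD by blast
    thus False by simp
  qed
  then obtain i j where ij0: "i \<noteq> j" "(f^^i) x = (f^^j) x" unfolding inj_def by blast
  have "\<exists>i m. 0 < m \<and> (f^^i) x = (f^^(i + m)) x"
  proof (cases "i < j")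
    case True thus ?thesis using ij0 by (intro exI[of _ i] exI[of _ "j - i"]) auto
  next
    case False hence "j < i" using ij0 by simp
    thus ?thesis using ij0 by (intro exI[of _ j] exI[of _ "i - j"]) auto
  qed
  then obtain i m where ij: "0 < m" "(f^^i) x = (f^^(i + m)) x" by blast
  have cancel: "(f^^(k + m)) x = (f^^k) x \<Longrightarrow> (f^^m) x = x" for k
  proof (induction k)
    case 0 thus ?case by simp
  next
    case (Suc k)
    have "f ((f^^(k + m)) x) = f ((f^^k) x)" using Suc.prems by simp
    hence "(f^^(k + m)) x = (f^^k) x" using inj inD by (auto simp: inj_on_def)
    thus ?case using Suc.IH by simp
  qed
  have per0: "(f^^m) x = x" using cancel[of i] ij(2) by (simp add: add.commute)
  have per: "(f^^(k*m)) x = x" for k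
  proof (induction k)
    case 0 thus ?case by simp
  next
    case (Suc k)
    have "(f^^(Suc k * m)) x = (f^^m) ((f^^(k*m)) x)" by (simp add: funpow_add)
    thus ?case using Suc per0 by simp
  qed
  obtain n where yn: "y = (f^^n) x" using y by (auto simp: orbit_iff)
  have "n \<le> n * m" using ij(1) by simp
  hence "(f^^(n*m - n)) y = (f^^(n*m)) x"
    by (metis yn funpow_add comp_apply le_add_diff_inverse2)
  also have "\<dots> = x" by (rule per)
  finally show ?thesis unfolding orbit_iff by blast
qed

lemma orbit_eq:
  assumes "finite D" "bij_betw f D D" "x \<in> D" "y \<in> orbit_of f x"
  shows "orbit_of f y = orbit_of f x"
proof
  show "orbit_of f y \<subseteq> orbit_of f x" using orbit_trans[OF assms(4)] .
  show "orbit_of f x \<subseteq> orbit_of f y" using orbit_trans[OF orbit_sym[OF assms]] .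
qed



lemma tsw_invol: "tsw x y (tsw x y z) = z"
  unfolding tsw_def by auto

lemma tsw_in: "x \<in> D \<Longrightarrow> y \<in> D \<Longrightarrow> z \<in> D \<Longrightarrow> tsw x y z \<in> D"
  unfolding tsw_def by auto

lemma tsw_bij:
  assumes "x \<in> D" "y \<in> D" shows "bij_betw (tsw x y) D D"
proof (rule bij_betw_byWitness[where f'="tsw x y"])
  show "\<forall>a\<in>D. tsw x y (tsw x y a) = a" by (simp add: tsw_invol)
  show "\<forall>a\<in>D. tsw x y (tsw x y a) = a" by (simp add: tsw_invol)
  show "tsw x y ` D \<subseteq> D" using tsw_in[OF assms] by blast
  show "tsw x y ` D \<subseteq> D" using tsw_in[OF assms] by blast
qed

lemma bij_tsw_comp: "bij_betw g D D \<Longrightarrow> x \<in> D \<Longrightarrow> y \<in> D \<Longrightarrow> bij_betw (g \<circ> tsw x y) D D"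
  by (rule bij_betw_trans[OF tsw_bij])

lemma bij_cl: "bij_betw g D D \<Longrightarrow> y \<in> D \<Longrightarrow> g y \<in> D"
  by (auto simp: bij_betw_def)

lemma orbit_fixed: "g r = r \<Longrightarrow> orbit_of g r = {r}"
  using orbit_closed[of r "{r}" g] orbit_self[of r g] by auto

lemma merge:
  assumes fin: "finite D" and bij: "bij_betw g D D" and z: "z \<in> D" and r: "r \<in> D"
    and zr: "z \<noteq> r" and gr: "g r = r"
  defines "h \<equiv> g \<circ> tsw z r"
  shows "bij_betw h D D"
    and "orbit_of h z = insert r (orbit_of g z)"
    and "\<And>u. u \<in> D \<Longrightarrow> u \<notin> insert r (orbit_of g z) \<Longrightarrow> orbit_of h u = orbit_of g u"
    and "card (orbit_of h ` D) + 1 = card (orbit_of g ` D)"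
proof -
  show bh: "bij_betw h D D" unfolding h_def by (rule bij_tsw_comp[OF bij z r])
  have rnot: "r \<notin> orbit_of g z"
  proof
    assume "r \<in> orbit_of g z"
    hence "z \<in> orbit_of g r" using orbit_sym[OF fin bij z] by blast
    thus False using orbit_fixed[of g r, OF gr] zr by auto
  qed
  have hz: "h z = r" and hr: "h r = g z" using gr by (auto simp: h_def tsw_def)
  have hy: "h y = g y" if "y \<noteq> z" "y \<noteq> r" for y using that by (auto simp: h_def tsw_def)
  show oz: "orbit_of h z = insert r (orbit_of g z)"
  proof
    show "orbit_of h z \<subseteq> insert r (orbit_of g z)"
    proof (rule orbit_closed)
      show "z \<in> insert r (orbit_of g z)" by (simp add: orbit_self)
      fix y assume y: "y \<in> insert r (orbit_of g z)"
      show "h y \<in> insert r (orbit_of g z)"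
      proof (cases "y = r")
        case True thus ?thesis using hr orbit_step[OF orbit_self, of g z] by simp
      next
        case False
        hence yo: "y \<in> orbit_of g z" using y by simp
        show ?thesis
        proof (cases "y = z")
          case True thus ?thesis using hz by simp
        next
          case False thus ?thesis using hy[OF False \<open>y \<noteq> r\<close>] orbit_step[OF yo] by simp
        qed
      qed
    qed
    have "orbit_of g z \<subseteq> orbit_of h z"
    proof (rule orbit_closed)
      show "z \<in> orbit_of h z" by (rule orbit_self)
      fix y assume y: "y \<in> orbit_of h z"
      show "g y \<in> orbit_of h z"
      proof (cases "y = z")
        case True
        have "r \<in> orbit_of h z" using orbit_step[OF orbit_self, of h z] hz by simp
        from orbit_step[OF this] show ?thesis using True hr by simp
      next
        case False
        show ?thesis
        proof (cases "y = r")
          case True thus ?thesis using gr y by simp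
        next
          case False thus ?thesis using hy[OF \<open>y \<noteq> z\<close> False] orbit_step[OF y] by simp
        qed
      qed
    qed
    moreover have "r \<in> orbit_of h z" using orbit_step[OF orbit_self, of h z] hz by simp
    ultimately show "insert r (orbit_of g z) \<subseteq> orbit_of h z" by blast
  qed
  show outside: "orbit_of h u = orbit_of g u" if u: "u \<in> D" "u \<notin> insert r (orbit_of g z)" for u
  proof (rule orbit_agree[where S="orbit_of g u"])
    show "u \<in> orbit_of g u" by (rule orbit_self)
    show "g y \<in> orbit_of g u" if "y \<in> orbit_of g u" for y using orbit_step[OF that] .
    fix y assume y: "y \<in> orbit_of g u"
    have "y \<noteq> z"
    proof
      assume "y = z"
      hence "u \<in> orbit_of g z" using orbit_sym[OF fin bij u(1) y] by simp
      thus False using u by simp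
    qed
    moreover have "y \<noteq> r"
    proof
      assume "y = r"
      hence "u \<in> orbit_of g r" using orbit_sym[OF fin bij u(1) y] by simp
      thus False using u orbit_fixed[of g r, OF gr] by simp
    qed
    ultimately show "h y = g y" using hy by simp
  qed
  define C where "C = orbit_of g ` (D - insert r (orbit_of g z))"
  have memC: "u \<in> D \<and> u \<notin> insert r (orbit_of g z)" if XC: "X \<in> C" and uX: "u \<in> X" for X u
  proof -
    obtain u0 where u0: "u0 \<in> D" "u0 \<notin> insert r (orbit_of g z)" "X = orbit_of g u0"
      using XC unfolding C_def by blast
    have "u \<in> D" using orbit_sub[OF u0(1), of g] bij uX u0(3) by (auto simp: bij_betw_def)
    moreover have "u \<notin> insert r (orbit_of g z)"
    proof
      assume "u \<in> insert r (orbit_of g z)"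
      hence "u \<in> orbit_of g z \<or> u = r" by auto
      moreover have "u0 \<in> orbit_of g u" using orbit_sym[OF fin bij u0(1)] uX u0(3) by simp
      ultimately have "u0 \<in> orbit_of g z \<or> u0 \<in> orbit_of g r"
        using orbit_trans by (metis subsetD)
      thus False using u0 orbit_fixed[of g r, OF gr] by auto
    qed
    ultimately show ?thesis by simp
  qed
  have finC: "finite C" using fin by (simp add: C_def)
  have g_img: "orbit_of g ` D = insert (orbit_of g z) (insert {r} C)"
  proof (rule set_eqI, rule iffI)
    fix X assume "X \<in> orbit_of g ` D"
    then obtain u where u: "u \<in> D" "X = orbit_of g u" by auto
    show "X \<in> insert (orbit_of g z) (insert {r} C)"
    proof (cases "u \<in> orbit_of g z")
      case True thus ?thesis using orbit_eq[OF fin bij z True] u by simp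
    next
      case False
      show ?thesis
      proof (cases "u = r")
        case True thus ?thesis using u orbit_fixed[of g r, OF gr] by simp
      next
        case F2: False thus ?thesis using u False by (auto simp: C_def)
      qed
    qed
  next
    fix X assume "X \<in> insert (orbit_of g z) (insert {r} C)"
    thus "X \<in> orbit_of g ` D" using z r orbit_fixed[of g r, OF gr]
      by (auto simp: C_def)
  qed
  have h_img: "orbit_of h ` D = insert (insert r (orbit_of g z)) C"
  proof (rule set_eqI, rule iffI)
    fix X assume "X \<in> orbit_of h ` D"
    then obtain u where u: "u \<in> D" "X = orbit_of h u" by auto
    show "X \<in> insert (insert r (orbit_of g z)) C"
    proof (cases "u \<in> insert r (orbit_of g z)")
      case True
      hence "u \<in> orbit_of h z" using oz by simp
      thus ?thesis using orbit_eq[OF fin bh z] u oz by simp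
    next
      case False thus ?thesis using u outside by (auto simp: C_def)
    qed
  next
    fix X assume X: "X \<in> insert (insert r (orbit_of g z)) C"
    show "X \<in> orbit_of h ` D"
    proof (cases "X \<in> C")
      case True
      then obtain u where u: "u \<in> D" "u \<notin> insert r (orbit_of g z)" "X = orbit_of g u"
        by (auto simp: C_def)
      thus ?thesis using outside[OF u(1,2)] by auto
    next
      case False thus ?thesis using X oz z by auto
    qed
  qed
  have n1: "orbit_of g z \<notin> C" using memC[of "orbit_of g z" z] orbit_self[of z g] by blast
  have n2: "{r} \<notin> C" using memC[of "{r}" r] by auto
  have n3: "insert r (orbit_of g z) \<notin> C" using memC[of _ r] by auto
  have n4: "orbit_of g z \<noteq> {r}" using orbit_self[of z g] zr by auto
  show "card (orbit_of h ` D) + 1 = card (orbit_of g ` D)"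
    unfolding g_img h_img using finC n1 n2 n3 n4 by simp
qed



lemma ext_count:
  assumes fin: "finite D" and sub: "D' \<subseteq> D" and bij: "bij_betw \<psi> D' D'"
  defines "g \<equiv> (\<lambda>z. if z \<in> D' then \<psi> z else z)"
  shows "bij_betw g D D"
    and "card (orbit_of g ` D) = card (orbit_of \<psi> ` D') + card (D - D')"
proof -
  have cl: "\<psi> y \<in> D'" if "y \<in> D'" for y using bij that by (auto simp: bij_betw_def)
  have "inj_on g D"
  proof (rule inj_onI)
    fix x y assume "x \<in> D" "y \<in> D" "g x = g y"
    thus "x = y" using bij cl unfolding g_def bij_betw_def inj_on_def
      by (auto split: if_splits)
  qed
  moreover have "g ` D \<subseteq> D" using cl sub by (auto simp: g_def)
  ultimately show bg: "bij_betw g D D" using endo_inj_surj[OF fin] by (simp add: bij_betw_def)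
  have o1: "orbit_of g z = orbit_of \<psi> z" if "z \<in> D'" for z
    by (rule orbit_agree[where S=D']) (auto simp: that cl g_def)
  have o2: "orbit_of g z = {z}" if "z \<notin> D'" for z using that by (intro orbit_fixed) (simp add: g_def)
  have img: "orbit_of g ` D = orbit_of \<psi> ` D' \<union> (\<lambda>z. {z}) ` (D - D')"
  proof (rule set_eqI, rule iffI)
    fix X assume "X \<in> orbit_of g ` D"
    then obtain u where u: "u \<in> D" "X = orbit_of g u" by blast
    show "X \<in> orbit_of \<psi> ` D' \<union> (\<lambda>z. {z}) ` (D - D')"
    proof (cases "u \<in> D'")
      case True thus ?thesis using u o1[OF True] by blast
    next
      case False thus ?thesis using u o2[OF False] by blast
    qed
  next
    fix X assume "X \<in> orbit_of \<psi> ` D' \<union> (\<lambda>z. {z}) ` (D - D')"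
    thus "X \<in> orbit_of g ` D"
    proof
      assume "X \<in> orbit_of \<psi> ` D'"
      then obtain u where u: "u \<in> D'" "X = orbit_of \<psi> u" by blast
      thus ?thesis using o1[OF u(1)] sub by blast
    next
      assume "X \<in> (\<lambda>z. {z}) ` (D - D')"
      then obtain u where u: "u \<in> D - D'" "X = {u}" by blast
      thus ?thesis using o2[of u] by blast
    qed
  qed
  have sD: "orbit_of \<psi> z \<subseteq> D'" if "z \<in> D'" for z using orbit_sub[OF that] cl by blast
  have disj: "orbit_of \<psi> ` D' \<inter> (\<lambda>z. {z}) ` (D - D') = {}"
  proof (rule ccontr)
    assume "orbit_of \<psi> ` D' \<inter> (\<lambda>z. {z}) ` (D - D') \<noteq> {}"
    then obtain u z where "u \<in> D'" "z \<in> D - D'" "orbit_of \<psi> u = {z}" by blast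
    thus False using sD[of u] by blast
  qed
  have fD': "finite D'" using finite_subset[OF sub fin] .
  have "card ((\<lambda>z. {z}) ` (D - D')) = card (D - D')" by (rule card_image) (auto simp: inj_on_def)
  moreover have "card (orbit_of g ` D) = card (orbit_of \<psi> ` D') + card ((\<lambda>z. {z}) ` (D - D'))"
    unfolding img by (rule card_Un_disjoint[OF _ _ disj]) (use fin fD' in auto)
  ultimately show "card (orbit_of g ` D) = card (orbit_of \<psi> ` D') + card (D - D')" by simp
qed

lemma transp_count:
  assumes fin: "finite D" and bij: "bij_betw g D D" and p: "p \<in> D" and q: "q \<in> D"
  shows "card (orbit_of g ` D) \<le> card (orbit_of (g \<circ> tsw p q) ` D) + 1"
proof -
  define h where "h = g \<circ> tsw p q"
  have bh: "bij_betw h D D" unfolding h_def by (rule bij_tsw_comp[OF bij p q])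
  define C where "C = orbit_of g ` (D - (orbit_of g p \<union> orbit_of g q))"
  have hy: "h y = g y" if "y \<noteq> p" "y \<noteq> q" for y using that by (auto simp: h_def tsw_def)
  have outside: "orbit_of h u = orbit_of g u" if u: "u \<in> D" "u \<notin> orbit_of g p \<union> orbit_of g q" for u
  proof (rule orbit_agree[where S="orbit_of g u"])
    show "u \<in> orbit_of g u" by (rule orbit_self)
    show "g y \<in> orbit_of g u" if "y \<in> orbit_of g u" for y using orbit_step[OF that] .
    fix y assume y: "y \<in> orbit_of g u"
    have "y \<noteq> p"
    proof
      assume "y = p"
      hence "u \<in> orbit_of g p" using orbit_sym[OF fin bij u(1) y] by simp
      thus False using u by simp
    qed
    moreover have "y \<noteq> q"
    proof
      assume "y = q"
      hence "u \<in> orbit_of g q" using orbit_sym[OF fin bij u(1) y] by simp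
      thus False using u by simp
    qed
    ultimately show "h y = g y" using hy by simp
  qed
  have "orbit_of g ` D \<subseteq> insert (orbit_of g p) (insert (orbit_of g q) C)"
  proof
    fix X assume "X \<in> orbit_of g ` D"
    then obtain u where u: "u \<in> D" "X = orbit_of g u" by auto
    show "X \<in> insert (orbit_of g p) (insert (orbit_of g q) C)"
    proof (cases "u \<in> orbit_of g p")
      case True thus ?thesis using orbit_eq[OF fin bij p True] u by simp
    next
      case F1: False
      show ?thesis
      proof (cases "u \<in> orbit_of g q")
        case True thus ?thesis using orbit_eq[OF fin bij q True] u by simp
      next
        case False thus ?thesis using u F1 unfolding C_def by blast
      qed
    qed
  qed
  hence "card (orbit_of g ` D) \<le> card (insert (orbit_of g p) (insert (orbit_of g q) C))"
    by (rule card_mono[rotated]) (simp add: C_def fin)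
  also have "\<dots> \<le> card C + 2" using fin by (simp add: C_def card_insert_if)
  finally have c1: "card (orbit_of g ` D) \<le> card C + 2" .
  have sub2: "insert (orbit_of h p) C \<subseteq> orbit_of h ` D"
  proof
    fix X assume "X \<in> insert (orbit_of h p) C"
    thus "X \<in> orbit_of h ` D"
    proof
      assume "X = orbit_of h p" thus ?thesis using p by simp
    next
      assume "X \<in> C"
      then obtain u where u: "u \<in> D" "u \<notin> orbit_of g p \<union> orbit_of g q" "X = orbit_of g u"
        unfolding C_def by blast
      thus ?thesis using outside[OF u(1,2)] by (metis imageI)
    qed
  qed
  have notC: "orbit_of h p \<notin> C"
  proof
    assume "orbit_of h p \<in> C"
    then obtain u where u: "u \<in> D" "u \<notin> orbit_of g p \<union> orbit_of g q" "orbit_of h p = orbit_of g u"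
      unfolding C_def by blast
    hence "p \<in> orbit_of g u" using orbit_self[of p h] by simp
    hence "u \<in> orbit_of g p" using orbit_sym[OF fin bij u(1)] by blast
    thus False using u by simp
  qed
  have "card C + 1 = card (insert (orbit_of h p) C)" using notC fin by (simp add: C_def)
  also have "\<dots> \<le> card (orbit_of h ` D)" by (rule card_mono[OF _ sub2]) (simp add: fin)
  finally show ?thesis using c1 unfolding h_def by simp
qed



lemma merge_card:
  assumes "finite D" "bij_betw g D D" "z \<in> D" "r \<in> D" "z \<noteq> r" "g r = r"
  shows "bij_betw (g \<circ> tsw z r) D D \<and> card (orbit_of (g \<circ> tsw z r) ` D) + 1 = card (orbit_of g ` D)"
  using merge(1,4)[OF assms] by blast

lemma agree_img:
  assumes "bij_betw h D D" "\<And>z. z \<in> D \<Longrightarrow> f z = h z"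
  shows "orbit_of f ` D = orbit_of h ` D"
proof -
  have "orbit_of f z = orbit_of h z" if "z \<in> D" for z
    by (rule orbit_agree[where S=D]) (use assms that in \<open>auto simp: bij_betw_def\<close>)
  thus ?thesis by (simp add: image_def)
qed

lemma coreA:
  assumes fin: "finite D" and sub: "D' \<subseteq> D" and bij: "bij_betw \<psi> D' D'"
    and p: "p \<in> D'" and q: "q \<in> D'" and pq: "p \<noteq> q"
    and R: "D - D' = {r1,r2,r3,r4,r5,r6}"
    and dist: "distinct [r1,r2,r3,r4,r5,r6]"
    and phi: "\<And>z. z \<in> D' \<Longrightarrow> z \<noteq> p \<Longrightarrow> z \<noteq> q \<Longrightarrow> \<phi> z = \<psi> z"
    and f1: "\<phi> p = r1" "\<phi> r1 = r2" "\<phi> r2 = r3" "\<phi> r3 = r4" "\<phi> r4 = \<psi> p"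
    and f2: "\<phi> q = r5" "\<phi> r5 = r6" "\<phi> r6 = \<psi> q"
  shows "card (orbit_of \<phi> ` D) = card (orbit_of \<psi> ` D')"
proof -
  have rD: "r1 \<in> D" "r2 \<in> D" "r3 \<in> D" "r4 \<in> D" "r5 \<in> D" "r6 \<in> D" using R by auto
  have rn: "r1 \<notin> D'" "r2 \<notin> D'" "r3 \<notin> D'" "r4 \<notin> D'" "r5 \<notin> D'" "r6 \<notin> D'" using R by auto
  have pD: "p \<in> D" "q \<in> D" using p q sub by auto
  have ne: "p \<noteq> r1" "p \<noteq> r2" "p \<noteq> r3" "p \<noteq> r4" "p \<noteq> r5" "p \<noteq> r6"
     "q \<noteq> r1" "q \<noteq> r2" "q \<noteq> r3" "q \<noteq> r4" "q \<noteq> r5" "q \<noteq> r6"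
    using p q rn by auto
  have d: "r1 \<noteq> r2" "r1 \<noteq> r3" "r1 \<noteq> r4" "r1 \<noteq> r5" "r1 \<noteq> r6"
    "r2 \<noteq> r3" "r2 \<noteq> r4" "r2 \<noteq> r5" "r2 \<noteq> r6" "r3 \<noteq> r4" "r3 \<noteq> r5" "r3 \<noteq> r6"
    "r4 \<noteq> r5" "r4 \<noteq> r6" "r5 \<noteq> r6" using dist by auto
  note ne' = ne[THEN not_sym] and d' = d[THEN not_sym] and pq' = pq[THEN not_sym]
  define g0 where "g0 = (\<lambda>z. if z \<in> D' then \<psi> z else z)"
  have e: "bij_betw g0 D D" "card (orbit_of g0 ` D) = card (orbit_of \<psi> ` D') + card (D - D')"
    using ext_count[OF fin sub bij] unfolding g0_def by blast+
  have c6: "card (D - D') = 6" unfolding R using d by simp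
  define h1 where "h1 = g0 \<circ> tsw p r1"
  define h2 where "h2 = h1 \<circ> tsw r1 r2"
  define h3 where "h3 = h2 \<circ> tsw r2 r3"
  define h4 where "h4 = h3 \<circ> tsw r3 r4"
  define h5 where "h5 = h4 \<circ> tsw q r5"
  define h6 where "h6 = h5 \<circ> tsw r5 r6"
  note defs = h1_def h2_def h3_def h4_def h5_def h6_def g0_def tsw_def
  have s1: "bij_betw h1 D D \<and> card (orbit_of h1 ` D) + 1 = card (orbit_of g0 ` D)"
    unfolding h1_def by (rule merge_card[OF fin e(1) pD(1) rD(1) ne(1)]) (simp add: g0_def rn)
  have s2: "bij_betw h2 D D \<and> card (orbit_of h2 ` D) + 1 = card (orbit_of h1 ` D)"
    unfolding h2_def by (rule merge_card[OF fin conjunct1[OF s1] rD(1) rD(2) d(1)]) (simp add: defs rn ne d ne' d')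
  have s3: "bij_betw h3 D D \<and> card (orbit_of h3 ` D) + 1 = card (orbit_of h2 ` D)"
    unfolding h3_def by (rule merge_card[OF fin conjunct1[OF s2] rD(2) rD(3) d(6)]) (simp add: defs rn ne d ne' d')
  have s4: "bij_betw h4 D D \<and> card (orbit_of h4 ` D) + 1 = card (orbit_of h3 ` D)"
    unfolding h4_def by (rule merge_card[OF fin conjunct1[OF s3] rD(3) rD(4) d(10)]) (simp add: defs rn ne d ne' d')
  have s5: "bij_betw h5 D D \<and> card (orbit_of h5 ` D) + 1 = card (orbit_of h4 ` D)"
    unfolding h5_def by (rule merge_card[OF fin conjunct1[OF s4] pD(2) rD(5) ne(11)]) (simp add: defs rn ne d ne' d')
  have s6: "bij_betw h6 D D \<and> card (orbit_of h6 ` D) + 1 = card (orbit_of h5 ` D)"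
    unfolding h6_def by (rule merge_card[OF fin conjunct1[OF s5] rD(5) rD(6) d(15)]) (simp add: defs rn ne d ne' d')
  have eq: "\<phi> z = h6 z" if z: "z \<in> D" for z
  proof (cases "z \<in> D'")
    case True
    show ?thesis
    proof (cases "z = p")
      case True thus ?thesis using f1 by (simp add: defs rn ne d ne' d' pq pq' p)
    next
      case F1: False
      show ?thesis
      proof (cases "z = q")
        case True thus ?thesis using f2 by (simp add: defs rn ne d ne' d' pq pq' q)
      next
        case False
        have "z \<noteq> r1" "z \<noteq> r2" "z \<noteq> r3" "z \<noteq> r4" "z \<noteq> r5" "z \<noteq> r6" using \<open>z \<in> D'\<close> rn by auto
        thus ?thesis using phi[OF \<open>z \<in> D'\<close> F1 False] F1 False \<open>z \<in> D'\<close> by (simp add: defs)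
      qed
    qed
  next
    case False
    hence "z \<in> {r1,r2,r3,r4,r5,r6}" using z R by blast
    hence "z = r1 \<or> z = r2 \<or> z = r3 \<or> z = r4 \<or> z = r5 \<or> z = r6" by simp
    thus ?thesis using f1 f2 ne d ne' d' pq pq' rn p q by (elim disjE) (simp_all add: defs)
  qed
  have "orbit_of \<phi> ` D = orbit_of h6 ` D" by (rule agree_img[OF conjunct1[OF s6] eq])
  thus ?thesis using s1 s2 s3 s4 s5 s6 e(2) c6 by simp
qed


lemma coreB:
  assumes fin: "finite D" and sub: "D' \<subseteq> D" and bij: "bij_betw \<psi> D' D'"
    and p: "p \<in> D'" and q: "q \<in> D'" and pq: "p \<noteq> q"
    and R: "D - D' = {r1,r2,r3,r4,r5,r6}"
    and dist: "distinct [r1,r2,r3,r4,r5,r6]"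
    and phi: "\<And>z. z \<in> D' \<Longrightarrow> z \<noteq> p \<Longrightarrow> z \<noteq> q \<Longrightarrow> \<phi> z = \<psi> z"
    and f1: "\<phi> p = r1" "\<phi> r1 = r2" "\<phi> r2 = \<psi> q"
    and f2: "\<phi> q = r3" "\<phi> r3 = r4" "\<phi> r4 = \<psi> p"
    and f3: "\<phi> r5 = r6" "\<phi> r6 = r5"
  shows "card (orbit_of \<psi> ` D') \<le> card (orbit_of \<phi> ` D)"
proof -
  have rD: "r1 \<in> D" "r2 \<in> D" "r3 \<in> D" "r4 \<in> D" "r5 \<in> D" "r6 \<in> D" using R by auto
  have rn: "r1 \<notin> D'" "r2 \<notin> D'" "r3 \<notin> D'" "r4 \<notin> D'" "r5 \<notin> D'" "r6 \<notin> D'" using R by auto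
  have pD: "p \<in> D" "q \<in> D" using p q sub by auto
  have ne: "p \<noteq> r1" "p \<noteq> r2" "p \<noteq> r3" "p \<noteq> r4" "p \<noteq> r5" "p \<noteq> r6"
     "q \<noteq> r1" "q \<noteq> r2" "q \<noteq> r3" "q \<noteq> r4" "q \<noteq> r5" "q \<noteq> r6"
    using p q rn by auto
  have d: "r1 \<noteq> r2" "r1 \<noteq> r3" "r1 \<noteq> r4" "r1 \<noteq> r5" "r1 \<noteq> r6"
    "r2 \<noteq> r3" "r2 \<noteq> r4" "r2 \<noteq> r5" "r2 \<noteq> r6" "r3 \<noteq> r4" "r3 \<noteq> r5" "r3 \<noteq> r6"
    "r4 \<noteq> r5" "r4 \<noteq> r6" "r5 \<noteq> r6" using dist by auto
  note ne' = ne[THEN not_sym] and d' = d[THEN not_sym] and pq' = pq[THEN not_sym]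
  define \<chi> where "\<chi> = \<psi> \<circ> tsw p q"
  have bchi: "bij_betw \<chi> D' D'" unfolding \<chi>_def by (rule bij_tsw_comp[OF bij p q])
  have tc: "card (orbit_of \<psi> ` D') \<le> card (orbit_of \<chi> ` D') + 1"
    unfolding \<chi>_def by (rule transp_count[OF finite_subset[OF sub fin] bij p q])
  define g0 where "g0 = (\<lambda>z. if z \<in> D' then \<chi> z else z)"
  have e: "bij_betw g0 D D" "card (orbit_of g0 ` D) = card (orbit_of \<chi> ` D') + card (D - D')"
    using ext_count[OF fin sub bchi] unfolding g0_def by blast+
  have c6: "card (D - D') = 6" unfolding R using d by simp
  define h1 where "h1 = g0 \<circ> tsw p r1"
  define h2 where "h2 = h1 \<circ> tsw r1 r2"
  define h3 where "h3 = h2 \<circ> tsw q r3"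
  define h4 where "h4 = h3 \<circ> tsw r3 r4"
  define h5 where "h5 = h4 \<circ> tsw r5 r6"
  note defs = h1_def h2_def h3_def h4_def h5_def g0_def tsw_def \<chi>_def
  have s1: "bij_betw h1 D D \<and> card (orbit_of h1 ` D) + 1 = card (orbit_of g0 ` D)"
    unfolding h1_def by (rule merge_card[OF fin e(1) pD(1) rD(1) ne(1)]) (simp add: g0_def rn)
  have s2: "bij_betw h2 D D \<and> card (orbit_of h2 ` D) + 1 = card (orbit_of h1 ` D)"
    unfolding h2_def by (rule merge_card[OF fin conjunct1[OF s1] rD(1) rD(2) d(1)]) (simp add: defs rn ne d ne' d')
  have s3: "bij_betw h3 D D \<and> card (orbit_of h3 ` D) + 1 = card (orbit_of h2 ` D)"
    unfolding h3_def by (rule merge_card[OF fin conjunct1[OF s2] pD(2) rD(3) ne(9)]) (simp add: defs rn ne d ne' d')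
  have s4: "bij_betw h4 D D \<and> card (orbit_of h4 ` D) + 1 = card (orbit_of h3 ` D)"
    unfolding h4_def by (rule merge_card[OF fin conjunct1[OF s3] rD(3) rD(4) d(10)]) (simp add: defs rn ne d ne' d')
  have s5: "bij_betw h5 D D \<and> card (orbit_of h5 ` D) + 1 = card (orbit_of h4 ` D)"
    unfolding h5_def by (rule merge_card[OF fin conjunct1[OF s4] rD(5) rD(6) d(15)]) (simp add: defs rn ne d ne' d')
  have eq: "\<phi> z = h5 z" if z: "z \<in> D" for z
  proof (cases "z \<in> D'")
    case True
    show ?thesis
    proof (cases "z = p")
      case True thus ?thesis using f1 by (simp add: defs rn ne d ne' d' pq pq' p)
    next
      case F1: False
      show ?thesis
      proof (cases "z = q")
        case True thus ?thesis using f2 by (simp add: defs rn ne d ne' d' pq pq' q)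
      next
        case False
        have "z \<noteq> r1" "z \<noteq> r2" "z \<noteq> r3" "z \<noteq> r4" "z \<noteq> r5" "z \<noteq> r6" using \<open>z \<in> D'\<close> rn by auto
        thus ?thesis using phi[OF \<open>z \<in> D'\<close> F1 False] F1 False \<open>z \<in> D'\<close> by (simp add: defs)
      qed
    qed
  next
    case False
    hence "z \<in> {r1,r2,r3,r4,r5,r6}" using z R by blast
    hence "z = r1 \<or> z = r2 \<or> z = r3 \<or> z = r4 \<or> z = r5 \<or> z = r6" by simp
    thus ?thesis using f1 f2 f3 ne d ne' d' pq pq' rn p q by (elim disjE) (simp_all add: defs)
  qed
  have "orbit_of \<phi> ` D = orbit_of h5 ` D" by (rule agree_img[OF conjunct1[OF s5] eq])
  thus ?thesis using s1 s2 s3 s4 s5 e(2) c6 tc by simp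
qed


definition dat :: "('e \<Rightarrow> 'v \<times> 'v) \<Rightarrow> 'e \<Rightarrow> 'v \<Rightarrow> 'e \<times> bool" where
  "dat ends e u = (e, fst (ends e) = u)"

lemma dat_tail: "ends e = (x,y) \<or> ends e = (y,x) \<Longrightarrow> dart_tail ends (dat ends e x) = x"
  unfolding dat_def dart_tail_def by auto

lemma dat_tail': "incident ends e x \<Longrightarrow> dart_tail ends (dat ends e x) = x"
  unfolding dat_def dart_tail_def incident_def by auto

lemma dat_rev: "ends e = (x,y) \<or> ends e = (y,x) \<Longrightarrow> x \<noteq> y \<Longrightarrow> dart_rev (dat ends e x) = dat ends e y"
  unfolding dat_def dart_rev_def by auto

lemma dat_darts: "e \<in> E \<Longrightarrow> dat ends e u \<in> darts E"
  unfolding dat_def darts_def by auto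

lemma dat_fst[simp]: "fst (dat ends e u) = e"
  unfolding dat_def by simp

lemma dat_ne: "ends e = (x,y) \<or> ends e = (y,x) \<Longrightarrow> x \<noteq> y \<Longrightarrow> dat ends e x \<noteq> dat ends e y"
  unfolding dat_def by auto

lemma dart_inc: "z \<in> darts E \<Longrightarrow> dart_tail ends z = u \<Longrightarrow> fst z \<in> E \<and> incident ends (fst z) u"
  unfolding darts_def dart_tail_def incident_def by (cases z) (auto split: if_splits)

lemma dart_eq_dat:
  assumes "ends e = (x,y) \<or> ends e = (y,x)" "x \<noteq> y" "fst z = e" "dart_tail ends z = x"
  shows "z = dat ends e x"
proof -
  obtain s where z: "z = (e, s)" using assms(3) by (cases z) auto
  from assms(1) show ?thesis
  proof
    assume h: "ends e = (x, y)"
    thus ?thesis using assms(2,4) z unfolding dat_def dart_tail_def by (cases s) auto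
  next
    assume h: "ends e = (y, x)"
    thus ?thesis using assms(2,4) z unfolding dat_def dart_tail_def by (cases s) auto
  qed
qed

lemma darts_edge:
  assumes "ends e = (x,y) \<or> ends e = (y,x)" "x \<noteq> y"
  shows "{e} \<times> UNIV = {dat ends e x, dat ends e y}"
  using assms unfolding dat_def by (auto simp: UNIV_bool)

lemma rev_darts: "z \<in> darts E \<Longrightarrow> dart_rev z \<in> darts E"
  unfolding darts_def dart_rev_def by auto

lemma rev_rev[simp]: "dart_rev (dart_rev z) = z"
  unfolding dart_rev_def by simp

lemma bij_rev: "bij_betw dart_rev (darts E) (darts E)"
  by (rule bij_betw_byWitness[where f'=dart_rev]) (auto simp: rev_darts)

lemma finite_darts: "finite E \<Longrightarrow> finite (darts E)"
  unfolding darts_def by simp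

lemma rs_bij: "rotation_system V E ends \<sigma> \<Longrightarrow> bij_betw \<sigma> (darts E) (darts E)"
  unfolding rotation_system_def by blast

lemma rs_cyc: "rotation_system V E ends \<sigma> \<Longrightarrow> d \<in> darts E \<Longrightarrow> d' \<in> darts E \<Longrightarrow>
   dart_tail ends d = dart_tail ends d' \<Longrightarrow> d' \<in> orbit_of \<sigma> d"
  unfolding rotation_system_def orbit_iff by blast

lemma rs_tail: "rotation_system V E ends \<sigma> \<Longrightarrow> d \<in> darts E \<Longrightarrow> dart_tail ends (\<sigma> d) = dart_tail ends d"
  unfolding rotation_system_def by blast

lemma rs_out: "rotation_system V E ends \<sigma> \<Longrightarrow> d \<notin> darts E \<Longrightarrow> \<sigma> d = d"
  unfolding rotation_system_def by blast

lemma rs_in: "rotation_system V E ends \<sigma> \<Longrightarrow> d \<in> darts E \<Longrightarrow> \<sigma> d \<in> darts E"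
  unfolding rotation_system_def bij_betw_def by blast

lemma rs_orbit_tail:
  assumes "rotation_system V E ends \<sigma>" "d \<in> darts E"
  shows "orbit_of \<sigma> d \<subseteq> {u \<in> darts E. dart_tail ends u = dart_tail ends d}"
proof (rule orbit_closed)
  show "d \<in> {u \<in> darts E. dart_tail ends u = dart_tail ends d}" using assms(2) by simp
  fix y assume "y \<in> {u \<in> darts E. dart_tail ends u = dart_tail ends d}"
  thus "\<sigma> y \<in> {u \<in> darts E. dart_tail ends u = dart_tail ends d}"
    using rs_tail[OF assms(1)] rs_in[OF assms(1)] by simp
qed

lemma rs_intro:
  assumes "bij_betw \<sigma> (darts E) (darts E)" "\<And>d. d \<notin> darts E \<Longrightarrow> \<sigma> d = d"
    "\<And>d. d \<in> darts E \<Longrightarrow> dart_tail ends (\<sigma> d) = dart_tail ends d"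
    "\<And>d d'. d \<in> darts E \<Longrightarrow> d' \<in> darts E \<Longrightarrow> dart_tail ends d = dart_tail ends d' \<Longrightarrow> d' \<in> orbit_of \<sigma> d"
  shows "rotation_system V E ends \<sigma>"
  using assms unfolding rotation_system_def orbit_iff by blast

lemma three_cycle:
  assumes rs: "rotation_system V E ends \<sigma>"
    and cls: "{u \<in> darts E. dart_tail ends u = t} = {x1, x2, x3}"
    and dist: "x1 \<noteq> x2" "x1 \<noteq> x3" "x2 \<noteq> x3"
  shows "(\<sigma> x1 = x2 \<and> \<sigma> x2 = x3 \<and> \<sigma> x3 = x1) \<or> (\<sigma> x1 = x3 \<and> \<sigma> x3 = x2 \<and> \<sigma> x2 = x1)"
proof -
  have mem: "x1 \<in> darts E" "x2 \<in> darts E" "x3 \<in> darts E"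
    "dart_tail ends x1 = t" "dart_tail ends x2 = t" "dart_tail ends x3 = t" using cls by blast+
  have img: "\<sigma> u \<in> {x1,x2,x3}" if "u \<in> {x1,x2,x3}" for u
  proof -
    have "u \<in> darts E" "dart_tail ends u = t" using that cls by blast+
    hence "\<sigma> u \<in> {u \<in> darts E. dart_tail ends u = t}" using rs_in[OF rs] rs_tail[OF rs] by auto
    thus ?thesis using cls by simp
  qed
  have inj: "inj_on \<sigma> (darts E)" using rs_bij[OF rs] by (simp add: bij_betw_def)
  have reach: "y \<in> orbit_of \<sigma> u" if "u \<in> {x1,x2,x3}" "y \<in> {x1,x2,x3}" for u y
  proof -
    have "u \<in> darts E" "dart_tail ends u = t" "y \<in> darts E" "dart_tail ends y = t"
      using that cls by blast+
    thus ?thesis using rs_cyc[OF rs, of u y] by simp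
  qed
  have notclosed: False if "u \<in> {x1,x2,x3}" "y \<in> {x1,x2,x3}" "y \<notin> S" "u \<in> S"
    "\<And>z. z \<in> S \<Longrightarrow> \<sigma> z \<in> S" for u y S
    using orbit_closed[of u S \<sigma>] that reach by blast
  have i1: "\<sigma> x1 \<noteq> x1" using notclosed[of x1 x2 "{x1}"] dist by auto
  have i2: "\<sigma> x2 \<noteq> x2" using notclosed[of x2 x1 "{x2}"] dist by auto
  have i3: "\<sigma> x3 \<noteq> x3" using notclosed[of x3 x1 "{x3}"] dist by auto
  show ?thesis
  proof (cases "\<sigma> x1 = x2")
    case True
    have "\<sigma> x2 \<noteq> x1"
    proof
      assume h: "\<sigma> x2 = x1"
      show False by (rule notclosed[of x1 x3 "{x1,x2}"]) (use dist True h in auto)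
    qed
    hence s2: "\<sigma> x2 = x3" using img[of x2] i2 by auto
    have "\<sigma> x3 \<noteq> x2" using inj mem True dist by (metis inj_onD)
    hence "\<sigma> x3 = x1" using img[of x3] i3 by auto
    thus ?thesis using True s2 by simp
  next
    case False
    hence s1: "\<sigma> x1 = x3" using img[of x1] i1 by auto
    have "\<sigma> x3 \<noteq> x1"
    proof
      assume h: "\<sigma> x3 = x1"
      show False by (rule notclosed[of x1 x2 "{x1,x3}"]) (use dist s1 h in auto)
    qed
    hence s3: "\<sigma> x3 = x2" using img[of x3] i3 by auto
    have "\<sigma> x2 \<noteq> x3" using inj mem s1 dist by (metis inj_onD)
    hence "\<sigma> x2 = x1" using img[of x2] i2 by auto
    thus ?thesis using s1 s3 by simp
  qed
qed


lemma bij_insert_fix: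
  assumes "bij_betw f S S" "f z = z" "z \<notin> S"
  shows "bij_betw f (insert z S) (insert z S)"
proof -
  have im: "f ` S = S" and inj: "inj_on f S" using assms(1) by (auto simp: bij_betw_def)
  have "inj_on f (insert z S)"
  proof (rule inj_onI)
    fix x y assume xy: "x \<in> insert z S" "y \<in> insert z S" "f x = f y"
    show "x = y"
    proof (cases "x = z")
      case True
      thus ?thesis using xy assms(2,3) im by (metis imageI inj inj_on_def insertE)
    next
      case False
      hence x: "x \<in> S" using xy by auto
      show ?thesis
      proof (cases "y = z")
        case True thus ?thesis using xy assms(2,3) im x by (metis imageI)
      next
        case False thus ?thesis using xy x inj by (auto simp: inj_on_def)
      qed
    qed
  qed
  moreover have "f ` insert z S = insert z S" using im assms(2) by simp
  ultimately show ?thesis by (simp add: bij_betw_def)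
qed

lemma exists_cyc:
  assumes "finite S"
  shows "\<exists>f. bij_betw f S S \<and> (\<forall>z. z \<notin> S \<longrightarrow> f z = z) \<and> (\<forall>z\<in>S. k (f z) = k z) \<and>
             (\<forall>z\<in>S. \<forall>z'\<in>S. k z = k z' \<longrightarrow> z' \<in> orbit_of f z)"
  using assms
proof (induction S rule: finite_induct)
  case empty show ?case by (intro exI[of _ id]) (auto simp: bij_betw_def)
next
  case (insert z S)
  then obtain f where bf: "bij_betw f S S" and out: "\<forall>u. u \<notin> S \<longrightarrow> f u = u"
    and key: "\<forall>u\<in>S. k (f u) = k u" and cyc: "\<forall>u\<in>S. \<forall>u'\<in>S. k u = k u' \<longrightarrow> u' \<in> orbit_of f u"
    by blast
  have zS: "z \<notin> S" by (rule insert.hyps(2))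
  have fz: "f z = z" using out zS by blast
  have bI: "bij_betw f (insert z S) (insert z S)" by (rule bij_insert_fix[OF bf fz zS])
  have finI: "finite (insert z S)" using insert.hyps(1) by simp
  have okey: "k u = k u0 \<and> u \<in> S" if "u \<in> orbit_of f u0" "u0 \<in> S" for u u0
  proof -
    have "orbit_of f u0 \<subseteq> {u \<in> S. k u = k u0}"
      by (rule orbit_closed) (use that(2) key bf in \<open>auto simp: bij_betw_def\<close>)
    thus ?thesis using that(1) by blast
  qed
  show ?case
  proof (cases "\<exists>z0\<in>S. k z0 = k z")
    case True
    then obtain z0 where z0: "z0 \<in> S" "k z0 = k z" by blast
    have zz0: "z0 \<noteq> z" using z0 zS by auto
    define g where "g = f \<circ> tsw z0 z"
    have z0I: "z0 \<in> insert z S" and zI: "z \<in> insert z S" using z0 by auto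
    note M = merge[OF finI bI z0I zI zz0 fz]
    have Mb: "bij_betw g (insert z S) (insert z S)" using M(1) unfolding g_def .
    have Mo: "orbit_of g z0 = insert z (orbit_of f z0)" using M(2) unfolding g_def .
    have Mu: "orbit_of g u = orbit_of f u" if "u \<in> insert z S" "u \<notin> insert z (orbit_of f z0)" for u
      using M(3)[OF that] unfolding g_def .
    have gz0: "g z0 = z" and gz: "g z = f z0" and gu: "\<And>u. u \<noteq> z0 \<Longrightarrow> u \<noteq> z \<Longrightarrow> g u = f u"
      using fz by (auto simp: g_def tsw_def)
    show ?thesis
    proof (intro exI[of _ g] conjI ballI allI impI)
      show "bij_betw g (insert z S) (insert z S)" by (rule Mb)
    next
      fix u assume u: "u \<notin> insert z S"
      hence "u \<noteq> z0" "u \<noteq> z" "u \<notin> S" using z0 by auto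
      thus "g u = u" using gu out by auto
    next
      fix u assume u: "u \<in> insert z S"
      show "k (g u) = k u"
      proof (cases "u = z0")
        case True thus ?thesis using gz0 z0 by simp
      next
        case F: False
        show ?thesis
        proof (cases "u = z")
          case True thus ?thesis using gz key z0 by simp
        next
          case False thus ?thesis using gu[OF F False] key u by simp
        qed
      qed
    next
      fix u u' assume u: "u \<in> insert z S" and u': "u' \<in> insert z S" and kk: "k u = k u'"
      show "u' \<in> orbit_of g u"
      proof (cases "k u = k z")
        case True
        have inO: "y \<in> orbit_of g z0" if "y \<in> insert z S" "k y = k z" for y
        proof (cases "y = z")
          case True thus ?thesis using Mo by simp
        next
          case False
          hence "y \<in> S" using that by simp
          hence "y \<in> orbit_of f z0" using cyc z0 that(2) by simp
          thus ?thesis using Mo by simp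
        qed
        have "u \<in> orbit_of g z0" "u' \<in> orbit_of g z0" using inO u u' True kk by auto
        moreover have "orbit_of g u = orbit_of g z0" by (rule orbit_eq[OF finI Mb z0I \<open>u \<in> orbit_of g z0\<close>])
        ultimately show ?thesis by simp
      next
        case False
        hence uS: "u \<in> S" and u'S: "u' \<in> S" using u u' kk by auto
        have "u \<notin> insert z (orbit_of f z0)" using False okey[of u z0] z0 by auto
        hence "orbit_of g u = orbit_of f u" using Mu u by blast
        thus ?thesis using cyc uS u'S kk by simp
      qed
    qed
  next
    case False
    show ?thesis
    proof (intro exI[of _ f] conjI ballI allI impI)
      show "bij_betw f (insert z S) (insert z S)" by (rule bI)
    next
      fix u assume "u \<notin> insert z S" thus "f u = u" using out by auto
    next
      fix u assume "u \<in> insert z S" thus "k (f u) = k u" using key fz by auto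
    next
      fix u u' assume u: "u \<in> insert z S" and u': "u' \<in> insert z S" and kk: "k u = k u'"
      show "u' \<in> orbit_of f u"
      proof (cases "u = z")
        case True
        hence "u' = z" using u' kk False by auto
        thus ?thesis using True orbit_self by simp
      next
        case F: False
        hence uS: "u \<in> S" using u by simp
        hence "u' \<in> S" using u' kk False by auto
        thus ?thesis using cyc uS kk by simp
      qed
    qed
  qed
qed

lemma rs_exists: "finite E \<Longrightarrow> \<exists>\<sigma>. rotation_system V E ends \<sigma>"
  using exists_cyc[OF finite_darts, of E "dart_tail ends"] rs_intro[of _ E ends V] by metis


locale beta =
  fixes E :: "'e set" and ends :: "'e \<Rightarrow> 'v \<times> 'v"
    and v v' w w' :: 'v and a b c d :: 'e
  assumes finE: "finite E"
    and vv': "v \<noteq> v'" and wv: "w \<noteq> v" "w \<noteq> v'" and w'v: "w' \<noteq> v" "w' \<noteq> v'"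
    and inE: "a \<in> E" "b \<in> E" "c \<in> E" "d \<in> E"
    and ea: "ends a = (v,v') \<or> ends a = (v',v)"
    and eb: "ends b = (v,v') \<or> ends b = (v',v)"
    and ec: "ends c = (v,w) \<or> ends c = (w,v)"
    and ed: "ends d = (v',w') \<or> ends d = (w',v')"
    and ab: "a \<noteq> b"
    and inc_v: "\<And>e. e \<in> E \<Longrightarrow> incident ends e v \<Longrightarrow> e \<in> {a,b,c}"
    and inc_v': "\<And>e. e \<in> E \<Longrightarrow> incident ends e v' \<Longrightarrow> e \<in> {a,b,d}"
    and wkept: "\<exists>e\<in>E. e \<noteq> c \<and> incident ends e w"
begin

definition "E' = E - {a,b,c}"
definition "D = darts E"
definition "D' = darts E'"
definition "av = dat ends a v"
definition "av' = dat ends a v'"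
definition "bv = dat ends b v"
definition "bv' = dat ends b v'"
definition "cv = dat ends c v"
definition "cw = dat ends c w"
definition "dv = dat ends d v'"
definition "q = dat ends d w'"

lemma ea': "ends a = (v',v) \<or> ends a = (v,v')" using ea by blast
lemma eb': "ends b = (v',v) \<or> ends b = (v,v')" using eb by blast
lemma ec': "ends c = (w,v) \<or> ends c = (v,w)" using ec by blast
lemma ed': "ends d = (w',v') \<or> ends d = (v',w')" using ed by blast

lemma ca: "c \<noteq> a" using ea ec wv vv' by auto
lemma cb: "c \<noteq> b" using eb ec wv vv' by auto
lemma da: "d \<noteq> a" using ea ed w'v vv' by auto
lemma db: "d \<noteq> b" using eb ed w'v vv' by auto
lemma dc: "d \<noteq> c" using ec ed w'v wv vv' by auto

lemmas edge_ne = ab ca cb da db dc ab[symmetric] ca[symmetric] cb[symmetric] da[symmetric] db[symmetric] dc[symmetric]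

lemma tails:
  "dart_tail ends av = v" "dart_tail ends av' = v'" "dart_tail ends bv = v" "dart_tail ends bv' = v'"
  "dart_tail ends cv = v" "dart_tail ends cw = w" "dart_tail ends dv = v'" "dart_tail ends q = w'"
  unfolding av_def av'_def bv_def bv'_def cv_def cw_def dv_def q_def
  by (rule dat_tail; use ea ea' eb eb' ec ec' ed ed' in blast)+

lemma revs:
  "dart_rev av = av'" "dart_rev av' = av" "dart_rev bv = bv'" "dart_rev bv' = bv"
  "dart_rev cv = cw" "dart_rev cw = cv" "dart_rev dv = q" "dart_rev q = dv"
  unfolding av_def av'_def bv_def bv'_def cv_def cw_def dv_def q_def
  by (rule dat_rev; use ea ea' eb eb' ec ec' ed ed' vv' wv w'v in auto)+

lemma fsts[simp]:
  "fst av = a" "fst av' = a" "fst bv = b" "fst bv' = b" "fst cv = c" "fst cw = c" "fst dv = d" "fst q = d"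
  unfolding av_def av'_def bv_def bv'_def cv_def cw_def dv_def q_def by simp_all

lemma same_ne: "av \<noteq> av'" "bv \<noteq> bv'" "cv \<noteq> cw" "dv \<noteq> q"
  unfolding av_def av'_def bv_def bv'_def cv_def cw_def dv_def q_def
  by (rule dat_ne; use ea ea' eb eb' ec ec' ed ed' vv' wv w'v in auto)+

lemma finD: "finite D" unfolding D_def by (rule finite_darts[OF finE])
lemma finD': "finite D'" unfolding D'_def E'_def by (rule finite_darts) (simp add: finE)
lemma subD: "D' \<subseteq> D" unfolding D'_def D_def E'_def darts_def by auto

lemma inD: "av \<in> D" "av' \<in> D" "bv \<in> D" "bv' \<in> D" "cv \<in> D" "cw \<in> D" "dv \<in> D" "q \<in> D"
  unfolding D_def av_def av'_def bv_def bv'_def cv_def cw_def dv_def q_def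
  using inE by (auto intro: dat_darts)

lemma inD': "dv \<in> D'" "q \<in> D'"
  unfolding D'_def E'_def dv_def q_def using inE edge_ne by (auto intro: dat_darts)

lemma D'_iff: "u \<in> D' \<longleftrightarrow> u \<in> D \<and> fst u \<notin> {a,b,c}"
  unfolding D'_def D_def E'_def darts_def by (cases u) auto

lemma notD': "av \<notin> D'" "av' \<notin> D'" "bv \<notin> D'" "bv' \<notin> D'" "cv \<notin> D'" "cw \<notin> D'"
  unfolding D'_iff by simp_all

lemma R: "D - D' = {av,av',bv,bv',cv,cw}"
proof -
  have "D - D' = ({a} \<times> UNIV) \<union> ({b} \<times> UNIV) \<union> ({c} \<times> UNIV)"
    using inE unfolding D'_def D_def E'_def darts_def by auto
  also have "\<dots> = {av,av',bv,bv',cv,cw}"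
    unfolding av_def av'_def bv_def bv'_def cv_def cw_def
    using darts_edge[where ends=ends and e=a and x=v and y=v', OF ea vv'] darts_edge[where ends=ends and e=b and x=v and y=v', OF eb vv'] darts_edge[where ends=ends and e=c and x=v and y=w, OF ec wv(1)[symmetric]] by auto
  finally show ?thesis .
qed

lemma at_v: "u \<in> D \<Longrightarrow> dart_tail ends u = v \<Longrightarrow> u \<in> {av,bv,cv}"
proof -
  assume u: "u \<in> D" "dart_tail ends u = v"
  have di: "fst u \<in> E \<and> incident ends (fst u) v" by (rule dart_inc) (use u in \<open>simp_all add: D_def\<close>)
  have "fst u \<in> {a,b,c}" using inc_v di by blast
  moreover have "fst u = a \<Longrightarrow> u = av" unfolding av_def
    by (rule dart_eq_dat[where x=v and y=v', OF ea vv' _ u(2)])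
  moreover have "fst u = b \<Longrightarrow> u = bv" unfolding bv_def
    by (rule dart_eq_dat[where x=v and y=v', OF eb vv' _ u(2)])
  moreover have "fst u = c \<Longrightarrow> u = cv" unfolding cv_def
    by (rule dart_eq_dat[where x=v and y=w, OF ec wv(1)[symmetric] _ u(2)])
  ultimately show ?thesis by blast
qed

lemma at_v': "u \<in> D \<Longrightarrow> dart_tail ends u = v' \<Longrightarrow> u \<in> {av',bv',dv}"
proof -
  assume u: "u \<in> D" "dart_tail ends u = v'"
  have di: "fst u \<in> E \<and> incident ends (fst u) v'" by (rule dart_inc) (use u in \<open>simp_all add: D_def\<close>)
  have "fst u \<in> {a,b,d}" using inc_v' di by blast
  moreover have "fst u = a \<Longrightarrow> u = av'" unfolding av'_def
    by (rule dart_eq_dat[where x=v' and y=v, OF ea' vv'[symmetric] _ u(2)])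
  moreover have "fst u = b \<Longrightarrow> u = bv'" unfolding bv'_def
    by (rule dart_eq_dat[where x=v' and y=v, OF eb' vv'[symmetric] _ u(2)])
  moreover have "fst u = d \<Longrightarrow> u = dv" unfolding dv_def
    by (rule dart_eq_dat[where x=v' and y=w', OF ed w'v(2)[symmetric] _ u(2)])
  ultimately show ?thesis by blast
qed

lemma cls_v: "{u \<in> D. dart_tail ends u = v} = {av,bv,cv}"
  using at_v inD tails by auto

lemma cls_v': "{u \<in> D. dart_tail ends u = v'} = {av',bv',dv}"
  using at_v' inD tails by auto

lemma R_other:
  assumes "u \<in> D" "u \<notin> D'" "dart_tail ends u \<noteq> v" "dart_tail ends u \<noteq> v'" shows "u = cw"
proof -
  have "u \<in> D - D'" using assms by simp
  hence "u \<in> {av,av',bv,bv',cv,cw}" unfolding R .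
  thus ?thesis using assms(3,4) tails by auto
qed

lemma kept_w: "\<exists>k0. k0 \<in> D' \<and> dart_tail ends k0 = w"
proof -
  obtain e where e: "e \<in> E" "e \<noteq> c" "incident ends e w" using wkept by blast
  have "e \<noteq> a" "e \<noteq> b" using e(3) ea eb wv unfolding incident_def by auto
  hence "dat ends e w \<in> D'" using e unfolding D'_def E'_def by (auto intro: dat_darts)
  moreover have "dart_tail ends (dat ends e w) = w" by (rule dat_tail'[OF e(3)])
  ultimately show ?thesis by blast
qed

lemma rev_D': "u \<in> D' \<Longrightarrow> dart_rev u \<in> D'"
  unfolding D'_def by (rule rev_darts)

lemma fst_ne: "fst x \<noteq> fst y \<Longrightarrow> x \<noteq> y" by auto

lemma ne_all:
  "av \<noteq> bv" "av \<noteq> bv'" "av \<noteq> cv" "av \<noteq> cw" "av \<noteq> dv" "av \<noteq> q"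
  "av' \<noteq> bv" "av' \<noteq> bv'" "av' \<noteq> cv" "av' \<noteq> cw" "av' \<noteq> dv" "av' \<noteq> q"
  "bv \<noteq> cv" "bv \<noteq> cw" "bv \<noteq> dv" "bv \<noteq> q" "bv' \<noteq> cv" "bv' \<noteq> cw" "bv' \<noteq> dv" "bv' \<noteq> q"
  "cv \<noteq> dv" "cv \<noteq> q" "cw \<noteq> dv" "cw \<noteq> q"
  by (auto intro!: fst_ne simp: edge_ne)

lemmas ne_all' = ne_all[THEN not_sym] same_ne same_ne[THEN not_sym]

end


context beta begin

lemma D_darts: "D = darts E" by (simp add: D_def)
lemma D'_darts: "D' = darts E'" by (simp add: D'_def)

lemma rev_in_D: "u \<in> D \<Longrightarrow> dart_rev u \<in> D" unfolding D_def by (rule rev_darts)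

lemma rev_inj: "dart_rev u = dart_rev u' \<Longrightarrow> u = u'"
  by (metis rev_rev)

lemma restrict:
  assumes rs: "rotation_system V E ends \<sigma>"
  shows "\<exists>\<sigma>'. rotation_system V' E' ends \<sigma>' \<and>
     card (orbit_of (\<sigma>' \<circ> dart_rev) ` D') \<le> card (orbit_of (\<sigma> \<circ> dart_rev) ` D)"
proof -
  have bijD: "bij_betw \<sigma> D D" using rs_bij[OF rs] by (simp add: D_def)
  have tailD: "dart_tail ends (\<sigma> u) = dart_tail ends u" if "u \<in> D" for u
    using rs_tail[OF rs] that by (simp add: D_def)
  have inDs: "\<sigma> u \<in> D" if "u \<in> D" for u using rs_in[OF rs] that by (simp add: D_def)
  have cycD: "u' \<in> orbit_of \<sigma> u" if "u \<in> D" "u' \<in> D" "dart_tail ends u = dart_tail ends u'" for u u'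
    using rs_cyc[OF rs] that by (simp add: D_def)
  have injD: "inj_on \<sigma> D" using bijD by (simp add: bij_betw_def)
  obtain k0 where k0: "k0 \<in> D'" "dart_tail ends k0 = w" using kept_w by blast
  have k0D: "k0 \<in> D" using k0 subD by blast
  have "cw \<in> \<sigma> ` D" using bijD inD by (simp add: bij_betw_def)
  then obtain x where xD: "x \<in> D" and sx: "\<sigma> x = cw" by (metis imageE)
  have tx: "dart_tail ends x = w" using tailD[OF xD] sx tails by simp
  define y where "y = \<sigma> cw"
  have yD: "y \<in> D" using inDs inD by (simp add: y_def)
  have ty: "dart_tail ends y = w" using tailD inD tails by (simp add: y_def)
  have cwfix: "\<sigma> cw \<noteq> cw"
  proof
    assume h: "\<sigma> cw = cw"
    have "k0 \<in> orbit_of \<sigma> cw" using cycD[OF inD(6) k0D] k0 tails by simp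
    thus False using orbit_fixed[of \<sigma> cw, OF h] k0 notD' by auto
  qed
  have xcw: "x \<noteq> cw" using sx cwfix by auto
  have xD': "x \<in> D'" using R_other[OF xD] xcw tx wv by blast
  have ycw: "y \<noteq> cw" using cwfix by (simp add: y_def)
  have yD': "y \<in> D'" using R_other[OF yD] ycw ty wv by blast
  have cfg_v: "(\<sigma> av = bv \<and> \<sigma> bv = cv \<and> \<sigma> cv = av) \<or> (\<sigma> av = cv \<and> \<sigma> cv = bv \<and> \<sigma> bv = av)"
    by (rule three_cycle[OF rs]) (use cls_v ne_all in \<open>simp_all add: D_def\<close>)
  have cfg_v': "(\<sigma> dv = av' \<and> \<sigma> av' = bv' \<and> \<sigma> bv' = dv) \<or> (\<sigma> dv = bv' \<and> \<sigma> bv' = av' \<and> \<sigma> av' = dv)"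
    by (rule three_cycle[OF rs]) (use cls_v' ne_all ne_all' in \<open>auto simp add: D_def\<close>)
  have xdv: "x \<noteq> dv" using tx tails wv by auto
  have ydv: "y \<noteq> dv" using ty tails wv by auto
  define \<sigma>' where "\<sigma>' = (\<lambda>z. if z \<notin> D' then z else if z = dv then dv else if z = x then y else \<sigma> z)"
  have s'dv: "\<sigma>' dv = dv" using inD' by (simp add: \<sigma>'_def)
  have s'x: "\<sigma>' x = y" using xD' xdv by (simp add: \<sigma>'_def)
  have s'o: "\<sigma>' z = \<sigma> z" if "z \<in> D'" "z \<noteq> dv" "z \<noteq> x" for z using that by (simp add: \<sigma>'_def)
  have K: "\<sigma> z \<in> D'" if z: "z \<in> D'" "z \<noteq> dv" "z \<noteq> x" for z
  proof (rule ccontr)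
    assume nz: "\<sigma> z \<notin> D'"
    have zD: "z \<in> D" using z subD by blast
    have "dart_tail ends z \<noteq> v"
    proof
      assume "dart_tail ends z = v"
      hence "z \<in> {av,bv,cv}" using at_v zD by blast
      thus False using z notD' by auto
    qed
    moreover have "dart_tail ends z \<noteq> v'"
    proof
      assume "dart_tail ends z = v'"
      hence "z \<in> {av',bv',dv}" using at_v' zD by blast
      thus False using z notD' by auto
    qed
    ultimately have "\<sigma> z = cw" using R_other[OF inDs[OF zD] nz] tailD[OF zD] by simp
    hence "z = x" using injD zD xD sx by (auto simp: inj_on_def)
    thus False using z by simp
  qed
  have sD': "\<sigma>' z \<in> D'" if "z \<in> D'" for z
    using that K inD' yD' by (auto simp: \<sigma>'_def)
  have nodv: "\<sigma> z \<noteq> dv" if "z \<in> D'" "z \<noteq> dv" for z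
  proof
    assume h: "\<sigma> z = dv"
    have zD: "z \<in> D" using that subD by blast
    have "dart_tail ends z = v'" using tailD[OF zD] h tails by simp
    hence "z \<in> {av',bv',dv}" using at_v' zD by blast
    thus False using that notD' by auto
  qed
  have noy: "\<sigma> z \<noteq> y" if "z \<in> D'" for z
  proof
    assume h: "\<sigma> z = y"
    have "z = cw" using injD h subD that inD by (auto simp: inj_on_def y_def)
    thus False using that notD' by simp
  qed
  have inj': "inj_on \<sigma>' D'"
  proof (rule inj_onI)
    fix z1 z2 assume z: "z1 \<in> D'" "z2 \<in> D'" "\<sigma>' z1 = \<sigma>' z2"
    show "z1 = z2"
    proof (cases "z1 = dv \<or> z1 = x")
      case True
      thus ?thesis
      proof
        assume z1: "z1 = dv"
        thus ?thesis using z s'dv s'x s'o nodv ydv xdv by (metis)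
      next
        assume z1: "z1 = x"
        thus ?thesis using z s'dv s'x s'o noy ydv xdv by (metis)
      qed
    next
      case False
      hence e1: "\<sigma>' z1 = \<sigma> z1" using s'o z by auto
      show ?thesis
      proof (cases "z2 = dv \<or> z2 = x")
        case True
        have "z1 \<noteq> dv" "z1 \<noteq> x" using False by auto
        from True show ?thesis
        proof
          assume "z2 = dv"
          hence "\<sigma> z1 = dv" using e1 z(3) s'dv by simp
          thus ?thesis using nodv[OF z(1) \<open>z1 \<noteq> dv\<close>] by simp
        next
          assume "z2 = x"
          hence "\<sigma> z1 = y" using e1 z(3) s'x by simp
          thus ?thesis using noy[OF z(1)] by simp
        qed
      next
        case F2: False
        hence "\<sigma>' z2 = \<sigma> z2" using s'o z by auto
        thus ?thesis using e1 z injD subD by (auto simp: inj_on_def)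
      qed
    qed
  qed
  have "\<sigma>' ` D' \<subseteq> D'" using sD' by blast
  hence "\<sigma>' ` D' = D'" using endo_inj_surj[OF finD' _ inj'] by blast
  hence bij': "bij_betw \<sigma>' D' D'" using inj' by (simp add: bij_betw_def)
  have rs': "rotation_system V' E' ends \<sigma>'"
  proof (rule rs_intro)
    show "bij_betw \<sigma>' (darts E') (darts E')" using bij' by (simp add: D'_def)
  next
    fix z assume "z \<notin> darts E'" thus "\<sigma>' z = z" by (simp add: \<sigma>'_def D'_def)
  next
    fix z assume "z \<in> darts E'"
    hence z: "z \<in> D'" by (simp add: D'_def)
    show "dart_tail ends (\<sigma>' z) = dart_tail ends z"
    proof (cases "z = dv")
      case True thus ?thesis using s'dv by simp
    next
      case F: False
      show ?thesis
      proof (cases "z = x")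
        case True thus ?thesis using s'x tx ty by simp
      next
        case False
        have "z \<in> D" using z subD by blast
        thus ?thesis using s'o[OF z F False] tailD by simp
      qed
    qed
  next
    fix z1 z2 assume "z1 \<in> darts E'" "z2 \<in> darts E'" and tt: "dart_tail ends z1 = dart_tail ends z2"
    hence z: "z1 \<in> D'" "z2 \<in> D'" by (simp_all add: D'_def)
    have zD: "z1 \<in> D" "z2 \<in> D" using z subD by auto
    show "z2 \<in> orbit_of \<sigma>' z1"
    proof (cases "dart_tail ends z1 = v'")
      case True
      hence "z1 \<in> {av',bv',dv}" "z2 \<in> {av',bv',dv}" using at_v' zD tt by auto
      hence "z1 = dv" "z2 = dv" using z notD' by auto
      thus ?thesis using orbit_self by simp
    next
      case False
      have z1dv: "z1 \<noteq> dv" using False tails by auto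
      have orbD': "orbit_of \<sigma>' z1 \<subseteq> D'" by (rule orbit_sub[OF z(1)]) (use sD' in auto)
      have nodvO: "dv \<notin> orbit_of \<sigma>' z1"
      proof
        assume "dv \<in> orbit_of \<sigma>' z1"
        hence "z1 \<in> orbit_of \<sigma>' dv" using orbit_sym[OF finD' bij' z(1)] by blast
        thus False using orbit_fixed[of \<sigma>' dv, OF s'dv] z1dv by simp
      qed
      define S where "S = orbit_of \<sigma>' z1 \<union> (if x \<in> orbit_of \<sigma>' z1 then {cw} else {})"
      have "orbit_of \<sigma> z1 \<subseteq> S"
      proof (rule orbit_closed)
        show "z1 \<in> S" using orbit_self[of z1 \<sigma>'] by (simp add: S_def)
        fix u assume u: "u \<in> S"
        show "\<sigma> u \<in> S"
        proof (cases "u \<in> orbit_of \<sigma>' z1")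
          case True
          have uD': "u \<in> D'" using True orbD' by blast
          have udv: "u \<noteq> dv" using True nodvO by blast
          show ?thesis
          proof (cases "u = x")
            case True thus ?thesis using \<open>u \<in> orbit_of \<sigma>' z1\<close> sx by (simp add: S_def)
          next
            case False
            thus ?thesis using s'o[OF uD' udv False] orbit_step[OF \<open>u \<in> orbit_of \<sigma>' z1\<close>]
              by (simp add: S_def)
          qed
        next
          case False
          hence "u = cw" "x \<in> orbit_of \<sigma>' z1" using u by (auto simp: S_def split: if_splits)
          thus ?thesis using orbit_step[of x \<sigma>' z1] s'x by (simp add: S_def y_def)
        qed
      qed
      moreover have "z2 \<in> orbit_of \<sigma> z1" using cycD[OF zD tt] .
      moreover have "z2 \<noteq> cw" using z notD' by auto
      ultimately show ?thesis by (auto simp: S_def split: if_splits)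
    qed
  qed
  define \<phi> where "\<phi> = \<sigma> \<circ> dart_rev"
  define \<psi> where "\<psi> = \<sigma>' \<circ> dart_rev"
  have bij_revD': "bij_betw dart_rev D' D'" using bij_rev by (simp add: D'_def)
  have bpsi: "bij_betw \<psi> D' D'" unfolding \<psi>_def by (rule bij_betw_trans[OF bij_revD' bij'])
  define p where "p = dart_rev x"
  have pD': "p \<in> D'" using rev_D'[OF xD'] by (simp add: p_def)
  have pq: "p \<noteq> q" using xdv revs(8) by (metis p_def rev_rev)
  have phi_eq: "\<phi> z = \<psi> z" if "z \<in> D'" "z \<noteq> p" "z \<noteq> q" for z
  proof -
    have "dart_rev z \<in> D'" using rev_D'[OF that(1)] .
    moreover have "dart_rev z \<noteq> x" using that(2) unfolding p_def by (metis rev_rev)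
    moreover have "dart_rev z \<noteq> dv" using that(3) revs(7) by (metis rev_rev)
    ultimately show ?thesis using s'o by (simp add: \<phi>_def \<psi>_def)
  qed
  have vals: "\<phi> p = cw" "\<psi> p = y" "\<phi> cw = \<sigma> cv" "\<phi> cv = y" "\<phi> av = \<sigma> av'" "\<phi> av' = \<sigma> av"
    "\<phi> bv = \<sigma> bv'" "\<phi> bv' = \<sigma> bv" "\<phi> q = \<sigma> dv" "\<psi> q = dv"
    using sx s'x s'dv revs by (simp_all add: \<phi>_def \<psi>_def p_def y_def)
  have qD': "q \<in> D'" by (rule inD')
  note base = finD subD bpsi pD' qD' pq
  have "card (orbit_of \<psi> ` D') \<le> card (orbit_of \<phi> ` D)"
    using cfg_v cfg_v'
  proof (elim disjE conjE)
    assume h: "\<sigma> av = bv" "\<sigma> bv = cv" "\<sigma> cv = av" "\<sigma> dv = av'" "\<sigma> av' = bv'" "\<sigma> bv' = dv"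
    have "card (orbit_of \<phi> ` D) = card (orbit_of \<psi> ` D')"
      by (rule coreA[of D D' \<psi> p q cw av bv' cv av' bv \<phi>, OF base])
        (use R ne_all ne_all' phi_eq vals h in auto)
    thus ?thesis by simp
  next
    assume h: "\<sigma> av = cv" "\<sigma> cv = bv" "\<sigma> bv = av" "\<sigma> dv = bv'" "\<sigma> bv' = av'" "\<sigma> av' = dv"
    have "card (orbit_of \<phi> ` D) = card (orbit_of \<psi> ` D')"
      by (rule coreA[of D D' \<psi> p q cw bv av' cv bv' av \<phi>, OF base])
        (use R ne_all ne_all' phi_eq vals h in auto)
    thus ?thesis by simp
  next
    assume h: "\<sigma> av = bv" "\<sigma> bv = cv" "\<sigma> cv = av" "\<sigma> dv = bv'" "\<sigma> bv' = av'" "\<sigma> av' = dv"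
    show ?thesis
      by (rule coreB[of D D' \<psi> p q cw av bv' cv bv av' \<phi>, OF base])
        (use R ne_all ne_all' phi_eq vals h in auto)
  next
    assume h: "\<sigma> av = cv" "\<sigma> cv = bv" "\<sigma> bv = av" "\<sigma> dv = av'" "\<sigma> av' = bv'" "\<sigma> bv' = dv"
    show ?thesis
      by (rule coreB[of D D' \<psi> p q cw bv av' cv av bv' \<phi>, OF base])
        (use R ne_all ne_all' phi_eq vals h in auto)
  qed
  thus ?thesis using rs' unfolding \<phi>_def \<psi>_def by blast
qed

end


context beta begin

lemma extend:
  assumes rs': "rotation_system V' E' ends \<sigma>'"
  shows "\<exists>\<sigma>. rotation_system V E ends \<sigma> \<and>
     card (orbit_of (\<sigma> \<circ> dart_rev) ` D) = card (orbit_of (\<sigma>' \<circ> dart_rev) ` D')"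
proof -
  have bij': "bij_betw \<sigma>' D' D'" using rs_bij[OF rs'] by (simp add: D'_def)
  have tail': "dart_tail ends (\<sigma>' u) = dart_tail ends u" if "u \<in> D'" for u
    using rs_tail[OF rs'] that by (simp add: D'_def)
  have in': "\<sigma>' u \<in> D'" if "u \<in> D'" for u using rs_in[OF rs'] that by (simp add: D'_def)
  have cyc': "u' \<in> orbit_of \<sigma>' u" if "u \<in> D'" "u' \<in> D'" "dart_tail ends u = dart_tail ends u'" for u u'
    using rs_cyc[OF rs'] that by (simp add: D'_def)
  have out': "\<sigma>' u = u" if "u \<notin> D'" for u using rs_out[OF rs'] that by (simp add: D'_def)
  have inj': "inj_on \<sigma>' D'" using bij' by (simp add: bij_betw_def)
  obtain x where xD': "x \<in> D'" and tx: "dart_tail ends x = w" using kept_w by blast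
  have xD: "x \<in> D" using xD' subD by blast
  have s'dv: "\<sigma>' dv = dv"
  proof -
    have "\<sigma>' dv \<in> D" "dart_tail ends (\<sigma>' dv) = v'" using in'[OF inD'(1)] subD tail'[OF inD'(1)] tails by auto
    hence "\<sigma>' dv \<in> {av',bv',dv}" using at_v' by blast
    thus ?thesis using in'[OF inD'(1)] notD' by auto
  qed
  define y where "y = \<sigma>' x"
  have yD': "y \<in> D'" using in'[OF xD'] by (simp add: y_def)
  have ty: "dart_tail ends y = w" using tail'[OF xD'] tx by (simp add: y_def)
  have xdv: "x \<noteq> dv" using tx tails wv by auto
  have ydv: "y \<noteq> dv" using ty tails wv by auto
  have xR: "x \<noteq> av" "x \<noteq> bv" "x \<noteq> cv" "x \<noteq> av'" "x \<noteq> bv'" "x \<noteq> cw"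
    using xD' notD' by auto
  have yR: "y \<noteq> av" "y \<noteq> bv" "y \<noteq> cv" "y \<noteq> av'" "y \<noteq> bv'" "y \<noteq> cw"
    using yD' notD' by auto
  note xR' = xR[THEN not_sym] and yR' = yR[THEN not_sym]
  define \<sigma> where "\<sigma> = (\<lambda>z. if z \<notin> D then z else if z = av then bv else if z = bv then cv
     else if z = cv then av else if z = dv then av' else if z = av' then bv' else if z = bv' then dv
     else if z = x then cw else if z = cw then y else \<sigma>' z)"
  note nes = ne_all ne_all' xR xR' yR yR' xdv ydv xdv[THEN not_sym] ydv[THEN not_sym]
  have vals: "\<sigma> av = bv" "\<sigma> bv = cv" "\<sigma> cv = av" "\<sigma> dv = av'" "\<sigma> av' = bv'" "\<sigma> bv' = dv"
    "\<sigma> x = cw" "\<sigma> cw = y"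
    using inD xD by (simp_all add: \<sigma>_def nes)
  define Sp where "Sp = {av,bv,cv,dv,av',bv',x,cw}"
  have spD: "Sp \<subseteq> D" using inD xD by (simp add: Sp_def)
  have other: "\<sigma> z = \<sigma>' z" "z \<in> D'" if "z \<in> D" "z \<notin> Sp" for z
  proof -
    show "z \<in> D'" using that R by (auto simp: Sp_def)
    show "\<sigma> z = \<sigma>' z" using that by (simp add: \<sigma>_def Sp_def)
  qed
  have otherv: "\<sigma>' z \<in> D'" "\<sigma>' z \<noteq> dv" "\<sigma>' z \<noteq> y" if "z \<in> D'" "z \<notin> Sp" for z
  proof -
    show "\<sigma>' z \<in> D'" using in' that(1) .
    show "\<sigma>' z \<noteq> dv"
    proof
      assume "\<sigma>' z = dv" hence "z = dv" using inj' that(1) inD' s'dv by (auto simp: inj_on_def)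
      thus False using that by (simp add: Sp_def)
    qed
    show "\<sigma>' z \<noteq> y"
    proof
      assume "\<sigma>' z = y" hence "z = x" using inj' that(1) xD' by (auto simp: inj_on_def y_def)
      thus False using that by (simp add: Sp_def)
    qed
  qed
  have spv: "\<sigma> z \<in> {bv,cv,av,av',bv',dv,cw,y}" if "z \<in> Sp" for z
    using that vals by (auto simp: Sp_def)
  have sD: "\<sigma> z \<in> D" if "z \<in> D" for z
  proof (cases "z \<in> Sp")
    case True thus ?thesis using spv[OF True] inD yD' subD by auto
  next
    case False thus ?thesis using other[OF that False] otherv[of z] subD by auto
  qed
  have injsp: "z1 = z2" if "z1 \<in> Sp" "z2 \<in> Sp" "\<sigma> z1 = \<sigma> z2" for z1 z2
    using that vals nes by (auto simp: Sp_def)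
  have inj: "inj_on \<sigma> D"
  proof (rule inj_onI)
    fix z1 z2 assume z: "z1 \<in> D" "z2 \<in> D" "\<sigma> z1 = \<sigma> z2"
    show "z1 = z2"
    proof (cases "z1 \<in> Sp")
      case T1: True
      show ?thesis
      proof (cases "z2 \<in> Sp")
        case True thus ?thesis using injsp T1 z by blast
      next
        case False
        have "\<sigma> z2 \<in> D'" "\<sigma> z2 \<noteq> dv" "\<sigma> z2 \<noteq> y" using other[OF z(2) False] otherv[of z2] False by auto
        thus ?thesis using spv[OF T1] z(3) notD' by auto
      qed
    next
      case F1: False
      show ?thesis
      proof (cases "z2 \<in> Sp")
        case True
        have "\<sigma> z1 \<in> D'" "\<sigma> z1 \<noteq> dv" "\<sigma> z1 \<noteq> y" using other[OF z(1) F1] otherv[of z1] F1 by auto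
        thus ?thesis using spv[OF True] z(3) notD' by auto
      next
        case False
        have "\<sigma>' z1 = \<sigma>' z2" using other[OF z(1) F1] other[OF z(2) False] z(3) by simp
        thus ?thesis using inj' other[OF z(1) F1] other[OF z(2) False] by (auto simp: inj_on_def)
      qed
    qed
  qed
  have "\<sigma> ` D \<subseteq> D" using sD by blast
  hence "\<sigma> ` D = D" using endo_inj_surj[OF finD _ inj] by blast
  hence bijs: "bij_betw \<sigma> D D" using inj by (simp add: bij_betw_def)
  have tailS: "dart_tail ends (\<sigma> z) = dart_tail ends z" if "z \<in> D" for z
  proof (cases "z \<in> Sp")
    case True
    thus ?thesis using vals tails tx ty by (auto simp: Sp_def)
  next
    case False
    thus ?thesis using other[OF that False] tail' by simp
  qed
  have orb_tail: "orbit_of \<sigma> z \<subseteq> {u \<in> D. dart_tail ends u = dart_tail ends z}" if "z \<in> D" for z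
    by (rule orbit_closed) (use that sD tailS in auto)
  have L: "orbit_of \<sigma>' z1 \<subseteq> orbit_of \<sigma> z1"
    if z1: "z1 \<in> D'" "dart_tail ends z1 \<noteq> v" "dart_tail ends z1 \<noteq> v'" for z1
  proof (rule orbit_closed)
    show "z1 \<in> orbit_of \<sigma> z1" by (rule orbit_self)
    fix u assume u: "u \<in> orbit_of \<sigma> z1"
    have z1D: "z1 \<in> D" using z1 subD by blast
    have uD: "u \<in> D" and tu: "dart_tail ends u = dart_tail ends z1" using orb_tail[OF z1D] u by auto
    show "\<sigma>' u \<in> orbit_of \<sigma> z1"
    proof (cases "u \<in> D'")
      case False
      hence "u = cw" using R_other[OF uD False] tu z1 by simp
      thus ?thesis using out' False u by simp
    next
      case True
      show ?thesis
      proof (cases "u = x")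
        case True
        have "\<sigma> (\<sigma> u) \<in> orbit_of \<sigma> z1" using orbit_step[OF orbit_step[OF u]] .
        thus ?thesis using True vals by (simp add: y_def)
      next
        case False
        have "u \<noteq> dv" using tu z1 tails by auto
        hence "u \<notin> Sp" using True False notD' by (auto simp: Sp_def)
        thus ?thesis using other[OF uD] orbit_step[OF u] by simp
      qed
    qed
  qed
  have cwx: "cw \<in> orbit_of \<sigma> x" using orbit_step[OF orbit_self, of \<sigma> x] vals by simp
  have rs: "rotation_system V E ends \<sigma>"
  proof (rule rs_intro)
    show "bij_betw \<sigma> (darts E) (darts E)" using bijs by (simp add: D_def)
  next
    fix z assume "z \<notin> darts E" thus "\<sigma> z = z" by (simp add: \<sigma>_def D_def)
  next
    fix z assume "z \<in> darts E" thus "dart_tail ends (\<sigma> z) = dart_tail ends z" using tailS by (simp add: D_def)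
  next
    fix d1 d2 assume "d1 \<in> darts E" "d2 \<in> darts E" and tt: "dart_tail ends d1 = dart_tail ends d2"
    hence dD: "d1 \<in> D" "d2 \<in> D" by (simp_all add: D_def)
    show "d2 \<in> orbit_of \<sigma> d1"
    proof (cases "dart_tail ends d1 = v")
      case True
      hence m: "d1 \<in> {av,bv,cv}" "d2 \<in> {av,bv,cv}" using at_v dD tt by auto
      have o: "{av,bv,cv} \<subseteq> orbit_of \<sigma> av"
        using orbit_self[of av \<sigma>] orbit_step[OF orbit_self, of \<sigma> av] orbit_step[OF orbit_step[OF orbit_self], of \<sigma> av] vals
        by simp
      have "orbit_of \<sigma> d1 = orbit_of \<sigma> av" by (rule orbit_eq[OF finD bijs inD(1)]) (use m o in blast)
      thus ?thesis using m o by blast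
    next
      case Fv: False
      show ?thesis
      proof (cases "dart_tail ends d1 = v'")
        case True
        hence m: "d1 \<in> {av',bv',dv}" "d2 \<in> {av',bv',dv}" using at_v' dD tt by auto
        have o: "{av',bv',dv} \<subseteq> orbit_of \<sigma> dv"
          using orbit_self[of dv \<sigma>] orbit_step[OF orbit_self, of \<sigma> dv] orbit_step[OF orbit_step[OF orbit_self], of \<sigma> dv] vals
          by simp
        have "orbit_of \<sigma> d1 = orbit_of \<sigma> dv" by (rule orbit_eq[OF finD bijs inD(7)]) (use m o in blast)
        thus ?thesis using m o by blast
      next
        case Fv': False
        have inx: "d \<in> orbit_of \<sigma> x" if "d \<in> D" "dart_tail ends d = w" for d
        proof (cases "d \<in> D'")
          case True
          have "d \<in> orbit_of \<sigma>' x" by (rule cyc'[OF xD' True]) (use that tx in simp)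
          thus ?thesis using L[OF xD'] tx wv by auto
        next
          case False
          hence "d = cw" using R_other[OF that(1) False] that(2) wv by simp
          thus ?thesis using cwx by simp
        qed
        show ?thesis
        proof (cases "d1 \<in> D' \<and> d2 \<in> D'")
          case True
          have "d2 \<in> orbit_of \<sigma>' d1" by (rule cyc') (use True tt in auto)
          thus ?thesis using L[of d1] True Fv Fv' by auto
        next
          case False
          hence "d1 = cw \<or> d2 = cw" using R_other dD Fv Fv' tt by metis
          hence tw: "dart_tail ends d1 = w" "dart_tail ends d2 = w" using tt tails by auto
          have "d1 \<in> orbit_of \<sigma> x" "d2 \<in> orbit_of \<sigma> x" using inx dD tw by auto
          moreover have "orbit_of \<sigma> d1 = orbit_of \<sigma> x" by (rule orbit_eq[OF finD bijs xD]) (use calculation in blast)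
          ultimately show ?thesis by simp
        qed
      qed
    qed
  qed
  define \<phi> where "\<phi> = \<sigma> \<circ> dart_rev"
  define \<psi> where "\<psi> = \<sigma>' \<circ> dart_rev"
  have bij_revD': "bij_betw dart_rev D' D'" using bij_rev by (simp add: D'_def)
  have bpsi: "bij_betw \<psi> D' D'" unfolding \<psi>_def by (rule bij_betw_trans[OF bij_revD' bij'])
  define p where "p = dart_rev x"
  have pD': "p \<in> D'" using rev_D'[OF xD'] by (simp add: p_def)
  have pq: "p \<noteq> q" using xdv revs(8) by (metis p_def rev_rev)
  have phi_eq: "\<phi> z = \<psi> z" if "z \<in> D'" "z \<noteq> p" "z \<noteq> q" for z
  proof -
    have r: "dart_rev z \<in> D'" using rev_D'[OF that(1)] .
    moreover have "dart_rev z \<noteq> x" using that(2) unfolding p_def by (metis rev_rev)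
    moreover have "dart_rev z \<noteq> dv" using that(3) revs(7) by (metis rev_rev)
    ultimately have "dart_rev z \<notin> Sp" using notD' by (auto simp: Sp_def)
    thus ?thesis using other[of "dart_rev z"] r subD by (auto simp: \<phi>_def \<psi>_def)
  qed
  have fv: "\<phi> p = cw" "\<psi> p = y" "\<phi> cw = av" "\<phi> av = bv'" "\<phi> bv' = cv" "\<phi> cv = y"
    "\<phi> q = av'" "\<phi> av' = bv" "\<phi> bv = dv" "\<psi> q = dv"
    using vals s'dv revs by (simp_all add: \<phi>_def \<psi>_def p_def y_def)
  have qD': "q \<in> D'" by (rule inD')
  have "card (orbit_of \<phi> ` D) = card (orbit_of \<psi> ` D')"
    by (rule coreA[of D D' \<psi> p q cw av bv' cv av' bv \<phi>, OF finD subD bpsi pD' qD' pq])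
      (use R ne_all ne_all' phi_eq fv in auto)
  thus ?thesis using rs unfolding \<phi>_def \<psi>_def by blast
qed

end


lemma num_faces_le:
  assumes "finite E" shows "num_faces E \<sigma> \<le> card (darts E) + 1"
proof (cases "E = {}")
  case True thus ?thesis by (simp add: num_faces_def)
next
  case False
  have "card (orbit_of (\<sigma> \<circ> dart_rev) ` darts E) \<le> card (darts E)"
    by (rule card_image_le[OF finite_darts[OF assms]])
  thus ?thesis using False by (simp add: num_faces_def)
qed

lemma card_sum_ge:
  assumes "finite A" "finite B" "C \<subseteq> A \<union> B"
  shows "card C \<le> card A + card B"
proof -
  have "card C \<le> card (A \<union> B)" using assms by (intro card_mono) auto
  also have "\<dots> \<le> card A + card B" by (rule card_Un_le)
  finally show ?thesis .
qed

lemma genus_set_finite: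
  assumes fE: "finite E"
  shows "finite {embedding_genus V E \<sigma> | \<sigma>. rotation_system V E ends \<sigma>}"
proof (rule finite_subset)
  show "{embedding_genus V E \<sigma> | \<sigma>. rotation_system V E ends \<sigma>} \<subseteq>
    (\<lambda>n. (2 - int (card V) + int (card E) - int n) div 2) ` {..card (darts E) + 1}"
  proof
    fix g assume "g \<in> {embedding_genus V E \<sigma> | \<sigma>. rotation_system V E ends \<sigma>}"
    then obtain \<sigma> where g: "g = embedding_genus V E \<sigma>" by blast
    have "num_faces E \<sigma> \<in> {..card (darts E) + 1}" using num_faces_le[OF fE] by simp
    moreover have "g = (\<lambda>n. (2 - int (card V) + int (card E) - int n) div 2) (num_faces E \<sigma>)"
      by (simp add: g embedding_genus_def)
    ultimately show "g \<in> (\<lambda>n. (2 - int (card V) + int (card E) - int n) div 2) ` {..card (darts E) + 1}"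
      by (rule rev_image_eqI)
  qed
qed simp

theorem theorem2p1:
  fixes V :: "'v set" and E :: "'e set" and ends :: "'e \<Rightarrow> 'v \<times> 'v"
    and v v' :: 'v and a b :: 'e
  assumes "multigraph V E ends"
    and "connected_graph V E ends"
    and "\<forall>u\<in>V. degree E ends u \<ge> 3"
    and "v \<in> V" and "v' \<in> V" and "v \<noteq> v'"
    and "a \<noteq> b"
    and "{e\<in>E. ends e = (v, v') \<or> ends e = (v', v)} = {a, b}"
    and "degree E ends v = 3" and "degree E ends v' = 3"
    and "\<exists>e\<in>E. \<exists>w. w \<notin> {v, v'} \<and> (ends e = (v, w) \<or> ends e = (w, v))"
    and "\<exists>e\<in>E. \<exists>w. w \<notin> {v, v'} \<and> (ends e = (v', w) \<or> ends e = (w, v'))"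
    and "connected_graph (del_vertex_V V v) (del_vertex_E E ends v) ends"
  shows "max_genus (del_vertex_V V v) (del_vertex_E E ends v) ends = max_genus V E ends - 1"
proof -
  note mg = assms(1)[unfolded multigraph_def]
  have finE: "finite E" and finV: "finite V" using mg by auto
  have endsV: "fst (ends e) \<in> V" "snd (ends e) \<in> V" if "e \<in> E" for e using mg that by auto
  obtain c w where c: "c \<in> E" "w \<notin> {v,v'}" "ends c = (v,w) \<or> ends c = (w,v)" using assms(11) by blast
  obtain d w' where d: "d \<in> E" "w' \<notin> {v,v'}" "ends d = (v',w') \<or> ends d = (w',v')" using assms(12) by blast
  have abE: "a \<in> E" "b \<in> E" and ea: "ends a = (v,v') \<or> ends a = (v',v)" and eb: "ends b = (v,v') \<or> ends b = (v',v)"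
    using assms(8) by blast+
  have cab: "c \<noteq> a" "c \<noteq> b" using ea eb c by auto
  have dabc: "d \<noteq> a" "d \<noteq> b" "d \<noteq> c" using ea eb c d assms(6) by auto
  have wV: "w \<in> V" using endsV[OF c(1)] c(3) by auto
  have deg_cnt: "e \<in> {e0,e1,e2}"
    if deg: "degree E ends u = 3" and e0: "e0 \<in> E" "incident ends e0 u" and e1: "e1 \<in> E" "incident ends e1 u"
      and e2: "e2 \<in> E" "incident ends e2 u" and dist: "e0 \<noteq> e1" "e0 \<noteq> e2" "e1 \<noteq> e2"
      and e: "e \<in> E" "incident ends e u" for u e e0 e1 e2
  proof (rule ccontr)
    assume ne: "e \<notin> {e0,e1,e2}"
    have "card {e0,e1,e2,e} \<le> card {e\<in>E. fst (ends e) = u} + card {e\<in>E. snd (ends e) = u}"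
      by (rule card_sum_ge) (use finE e0 e1 e2 e in \<open>auto simp: incident_def\<close>)
    also have "\<dots> = 3" using deg by (simp add: degree_def)
    moreover have "card {e0,e1,e2,e} = 4" using ne dist by (auto simp: card_insert_if)
    ultimately show False by simp
  qed
  have inc_abc: "incident ends a v" "incident ends b v" "incident ends c v" using ea eb c by (auto simp: incident_def)
  have inc_abd: "incident ends a v'" "incident ends b v'" "incident ends d v'" using ea eb d by (auto simp: incident_def)
  have inc_v: "e \<in> {a,b,c}" if "e \<in> E" "incident ends e v" for e
    by (rule deg_cnt[OF assms(9)]) (use abE c inc_abc cab assms(7) that in auto)
  have inc_v': "e \<in> {a,b,d}" if "e \<in> E" "incident ends e v'" for e
    by (rule deg_cnt[OF assms(10)]) (use abE d inc_abd dabc assms(7) that in auto)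
  have wkept: "\<exists>e\<in>E. e \<noteq> c \<and> incident ends e w"
  proof (rule ccontr)
    assume "\<not> ?thesis"
    hence none: "e \<in> E \<Longrightarrow> incident ends e w \<Longrightarrow> e = c" for e by blast
    let ?A = "{e\<in>E. fst (ends e) = w}" and ?B = "{e\<in>E. snd (ends e) = w}"
    have sub: "?A \<union> ?B \<subseteq> {c}"
    proof
      fix e assume "e \<in> ?A \<union> ?B"
      hence "e \<in> E" "incident ends e w" by (auto simp: incident_def)
      thus "e \<in> {c}" using none by blast
    qed
    have dis: "?A \<inter> ?B = {}"
    proof (rule ccontr)
      assume "?A \<inter> ?B \<noteq> {}"
      then obtain e where "e \<in> ?A" "e \<in> ?B" by blast
      hence "e = c" "fst (ends e) = w" "snd (ends e) = w" using sub by auto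
      moreover have "fst (ends c) \<noteq> snd (ends c)" using c(2,3) by auto
      ultimately show False by simp
    qed
    have fA: "finite ?A" "finite ?B" using finE by auto
    have "card ?A + card ?B = card (?A \<union> ?B)" using card_Un_disjoint[OF fA dis] by simp
    also have "\<dots> \<le> card {c}" by (rule card_mono) (use sub in auto)
    finally have "card ?A + card ?B \<le> 1" by simp
    moreover have "degree E ends w \<ge> 3" using assms(3) wV by blast
    ultimately show False by (simp add: degree_def)
  qed
  interpret beta E ends v v' w w' a b c d
    by unfold_locales (use finE assms(6,7) c d abE ea eb inc_v inc_v' wkept in auto)
  have delE: "del_vertex_E E ends v = E'"
    unfolding del_vertex_E_def E'_def using inc_v inc_abc by blast
  have delV: "del_vertex_V V v = V - {v}" by (simp add: del_vertex_V_def)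
  have cE: "card E' = card E - 3" "card E \<ge> 3"
  proof -
    have "{a,b,c} \<subseteq> E" using abE c by auto
    moreover have "card {a,b,c} = 3" using cab assms(7) by auto
    ultimately show "card E' = card E - 3" "card E \<ge> 3"
      unfolding E'_def using card_Diff_subset[of "{a,b,c}" E] card_mono[OF finE, of "{a,b,c}"] by auto
  qed
  have cV: "card (V - {v}) = card V - 1" "card V \<ge> 1"
    using assms(4) finV by (auto simp: card_gt_0_iff Suc_le_eq)
  have Ene: "E \<noteq> {}" using abE by auto
  have E'ne: "E' \<noteq> {}" using inD' unfolding D'_def darts_def by auto
  have nfE: "num_faces E \<sigma> = card (orbit_of (\<sigma> \<circ> dart_rev) ` D)" for \<sigma>
    using Ene by (simp add: num_faces_def D_def)
  have nfE': "num_faces E' \<sigma> = card (orbit_of (\<sigma> \<circ> dart_rev) ` D')" for \<sigma>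
    using E'ne by (simp add: num_faces_def D'_def)
  define X where "X = 2 - int (card V) + int (card E)"
  have gE: "embedding_genus V E \<sigma> = (X - int (num_faces E \<sigma>)) div 2" for \<sigma>
    by (simp add: embedding_genus_def X_def)
  have gE': "embedding_genus (V - {v}) E' \<sigma> = (X - int (num_faces E' \<sigma>)) div 2 - 1" for \<sigma>
  proof -
    have "embedding_genus (V - {v}) E' \<sigma> = (X - int (num_faces E' \<sigma>) - 2) div 2"
      using cE cV by (simp add: embedding_genus_def X_def of_nat_diff algebra_simps)
    thus ?thesis by simp
  qed
  define S where "S = {embedding_genus V E \<sigma> | \<sigma>. rotation_system V E ends \<sigma>}"
  define S' where "S' = {embedding_genus (V - {v}) E' \<sigma> | \<sigma>. rotation_system (V - {v}) E' ends \<sigma>}"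
  have finS: "finite S" unfolding S_def by (rule genus_set_finite[OF finE])
  have finS': "finite S'" unfolding S'_def by (rule genus_set_finite) (simp add: E'_def finE)
  obtain \<sigma>0 where "rotation_system V E ends \<sigma>0" using rs_exists[OF finE] by blast
  hence neS: "S \<noteq> {}" by (auto simp: S_def)
  have E'fin: "finite E'" using finE by (simp add: E'_def)
  obtain \<sigma>1 where "rotation_system (V - {v}) E' ends \<sigma>1" using rs_exists[OF E'fin] by blast
  hence neS': "S' \<noteq> {}" by (auto simp: S'_def)
  have A: "\<exists>g'\<in>S'. g - 1 \<le> g'" if gS: "g \<in> S" for g
  proof -
    obtain \<sigma> where rs: "rotation_system V E ends \<sigma>" and g: "g = embedding_genus V E \<sigma>"
      using gS unfolding S_def by blast
    obtain \<sigma>' where rs': "rotation_system (V - {v}) E' ends \<sigma>'"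
      and le: "card (orbit_of (\<sigma>' \<circ> dart_rev) ` D') \<le> card (orbit_of (\<sigma> \<circ> dart_rev) ` D)"
      using restrict[OF rs] by blast
    have "g - 1 \<le> embedding_genus (V - {v}) E' \<sigma>'"
      unfolding g gE gE' nfE nfE' using le by (simp add: zdiv_mono1)
    thus ?thesis using rs' by (auto simp: S'_def)
  qed
  have B: "\<exists>g\<in>S. g' + 1 \<le> g" if gS: "g' \<in> S'" for g'
  proof -
    obtain \<sigma>' where rs': "rotation_system (V - {v}) E' ends \<sigma>'" and g: "g' = embedding_genus (V - {v}) E' \<sigma>'"
      using gS unfolding S'_def by blast
    obtain \<sigma> where rs: "rotation_system V E ends \<sigma>"
      and eq: "card (orbit_of (\<sigma> \<circ> dart_rev) ` D) = card (orbit_of (\<sigma>' \<circ> dart_rev) ` D')"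
      using extend[OF rs'] by blast
    have "g' + 1 = embedding_genus V E \<sigma>"
      unfolding g gE gE' nfE nfE' using eq by simp
    thus ?thesis using rs by (auto simp: S_def)
  qed
  have m1: "Max S - 1 \<le> Max S'"
  proof -
    obtain g' where "g' \<in> S'" "Max S - 1 \<le> g'" using A[OF Max_in[OF finS neS]] by blast
    thus ?thesis using Max_ge[OF finS'] by fastforce
  qed
  have m2: "Max S' + 1 \<le> Max S"
  proof -
    obtain g where "g \<in> S" "Max S' + 1 \<le> g" using B[OF Max_in[OF finS' neS']] by blast
    thus ?thesis using Max_ge[OF finS] by fastforce
  qed
  have "max_genus (V - {v}) E' ends = Max S'" by (simp add: max_genus_def S'_def)
  moreover have "max_genus V E ends = Max S" by (simp add: max_genus_def S_def)
  ultimately show ?thesis unfolding delE delV using m1 m2 by simp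
qed


end
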